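(* The tuple $(K[\mathcal{T}[\infty]],/,\Delta_{\mathrm s})$ is a connected graded infinitesimal bialgebra, i.e. $/$ is associative with unit the one-node tree, $\Delta_{\mathrm s}$ is coassociative, and $\Delta_{\mathrm s}(t/w)=\Delta_{\mathrm s}(t)/(\odot\otimes w)+(t\otimes\odot)/\Delta_{\mathrm s}(w)-t\otimes w$ for all $t,w\in\mathcal{T}[\infty]$. Consequently $K[\mathcal{T}[\infty]]$ is isomorphic, as an infinitesimal bialgebra, to the tensor algebra $T(\mathrm{Prim}(K[\mathcal{T}[\infty]]))$ with concatenation product and deconcatenation coproduct; in particular it is cofree (among connected coalgebras).
   Context: $K$ is a field. A tree is a finite planar rooted tree, degree = number of non-root nodes, $\odot$ the one-node tree. An $n$--tree is a tree of degree $n$ whose non-root nodes are labelled bijectively by $\{1,\dots,n\}$; $\mathcal{T}[\infty]$ is the set of all $n$--trees ($n\ge0$), $K[\mathcal{T}[\infty]]$ the vector space with basis $\mathcal{T}[\infty]$, graded by degree. Nodes are ordered by depth-first post-order (subtrees left to right recursively, then the node; root maximal); write $u_1<\dots<u_n$ for non-root nodes. For a set $A$ of non-root nodes, $t_A$ is obtained by deleting non-root nodes outside $A$ (children of a deleted node attached in order to its parent in its place), labels kept; $t_{[i,j]}=t_{\{u_h,\dots,u_k\}}$ if $i\le j$ and $[i,j]\cap[n]=[h,k]\ne\emptyset$, else $\odot$. The standardization $\mathrm s(t)$ of an $\mathbb N$-labelled tree with distinct labels relabels its nodes by $1,\dots,|t|$ preserving relative order. $\Delta_{\mathrm s}(t)=\sum_{k=0}^n\mathrm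 s(t_{[1,k]})\otimes\mathrm s(t_{[k+1,n]})$. The $m$--shift $w[m]$ adds $m$ to every label. The dot product $t\cdot w$ identifies the roots of $t$ and $w$, the root-children of $t$ (in order) followed by those of $w$. For $|t|=m$, $t/w:=t\cdot w[m]$, extended bilinearly. An infinitesimal bialgebra is an algebra $H$ with a coassociative counital coproduct $\Delta$ satisfying $\Delta(xy)=\Delta(x)(1\otimes y)+(x\otimes1)\Delta(y)-x\otimes y$; $\mathrm{Prim}(H)=\{x:\Delta(x)=1\otimes x+x\otimes1\}$; connected means graded with one-dimensional degree-0 part. *)

theory Defs
  imports "HOL-Library.Poly_Mapping"
begin

text \<open>A (planar rooted) tree is represented by the ordered list of subtrees hanging from its
  (unlabelled) root; the one-node tree is the empty list.\<close>

datatype ltree = Nd (lab: nat) (kids: "ltree list")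

type_synonym rtree = "ltree list"

fun post :: "ltree \<Rightarrow> nat list" where
  "post (Nd a ts) = concat (map post ts) @ [a]"

definition fpost :: "rtree \<Rightarrow> nat list" where
  "fpost f = concat (map post f)"

text \<open>Deleting all non-root nodes whose label is not in P; children of a deleted node are
  attached in order to its parent in its place.  (Labels are distinct, so a set of nodes is
  described by its set of labels.)\<close>
fun restr :: "nat set \<Rightarrow> ltree \<Rightarrow> ltree list" where
  "restr P (Nd a ts) =
     (if a \<in> P then [Nd a (concat (map (restr P) ts))] else concat (map (restr P) ts))"

definition frestr :: "nat set \<Rightarrow> rtree \<Rightarrow> rtree" where
  "frestr P f = concat (map (restr P) f)"

fun relab :: "(nat \<Rightarrow> nat) \<Rightarrow> ltree \<Rightarrow> ltree" where
  "relab g (Nd a ts) = Nd (g a) (map (relab g) ts)"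

text \<open>Standardization: relabel by 1,...,|t| preserving relative order.\<close>
definition std :: "rtree \<Rightarrow> rtree" where
  "std f = map (relab (\<lambda>a. card {b \<in> set (fpost f). b \<le> a})) f"

definition shift :: "nat \<Rightarrow> rtree \<Rightarrow> rtree" where
  "shift m f = map (relab (\<lambda>a. a + m)) f"

definition is_ntree :: "rtree \<Rightarrow> bool" where
  "is_ntree f \<longleftrightarrow> set (fpost f) = {1..length (fpost f)}"

typedef ntree = "{f. is_ntree f}" morphisms rep_nt Abs_nt
  by (rule exI[of _ "[]"]) (simp add: is_ntree_def fpost_def)

definition deg :: "ntree \<Rightarrow> nat" where
  "deg t = length (fpost (rep_nt t))"

definition odot :: ntree where
  "odot = Abs_nt []"

text \<open>t / w = t \<cdot> w[|t|] (dot product = identify roots, concatenate root-children).\<close>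
definition slash :: "ntree \<Rightarrow> ntree \<Rightarrow> ntree" where
  "slash t w = Abs_nt (rep_nt t @ shift (deg t) (rep_nt w))"

definition seg_lo :: "ntree \<Rightarrow> nat \<Rightarrow> ntree" where
  "seg_lo t k = Abs_nt (std (frestr (set (take k (fpost (rep_nt t)))) (rep_nt t)))"

definition seg_hi :: "ntree \<Rightarrow> nat \<Rightarrow> ntree" where
  "seg_hi t k = Abs_nt (std (frestr (set (drop k (fpost (rep_nt t)))) (rep_nt t)))"

definition smult :: "'k::comm_ring_1 \<Rightarrow> ('a \<Rightarrow>\<^sub>0 'k) \<Rightarrow> ('a \<Rightarrow>\<^sub>0 'k)" where
  "smult c p = Poly_Mapping.map (\<lambda>x. c * x) p"

definition basis :: "'a \<Rightarrow> ('a \<Rightarrow>\<^sub>0 'k::comm_ring_1)" where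
  "basis a = Poly_Mapping.single a 1"

definition lin_ext :: "('a \<Rightarrow> ('b \<Rightarrow>\<^sub>0 'k::comm_ring_1)) \<Rightarrow> ('a \<Rightarrow>\<^sub>0 'k) \<Rightarrow> ('b \<Rightarrow>\<^sub>0 'k)" where
  "lin_ext f x = (\<Sum>a\<in>Poly_Mapping.keys x. smult (Poly_Mapping.lookup x a) (f a))"

definition bil_ext :: "('a \<Rightarrow> 'b \<Rightarrow> ('c \<Rightarrow>\<^sub>0 'k::comm_ring_1)) \<Rightarrow>
    ('a \<Rightarrow>\<^sub>0 'k) \<Rightarrow> ('b \<Rightarrow>\<^sub>0 'k) \<Rightarrow> ('c \<Rightarrow>\<^sub>0 'k)" where
  "bil_ext f x y = (\<Sum>a\<in>Poly_Mapping.keys x. \<Sum>b\<in>Poly_Mapping.keys y. smult (Poly_Mapping.lookup x a * Poly_Mapping.lookup y b) (f a b))"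

definition is_linear :: "(('a \<Rightarrow>\<^sub>0 'k::comm_ring_1) \<Rightarrow> ('b \<Rightarrow>\<^sub>0 'k)) \<Rightarrow> bool" where
  "is_linear \<phi> \<longleftrightarrow> (\<forall>x y. \<phi> (x + y) = \<phi> x + \<phi> y) \<and> (\<forall>c x. \<phi> (smult c x) = smult c (\<phi> x))"

text \<open>Tensor products K[A] \<otimes> K[B] = K[A \<times> B].\<close>
definition tensor :: "('a \<Rightarrow>\<^sub>0 'k::comm_ring_1) \<Rightarrow> ('b \<Rightarrow>\<^sub>0 'k) \<Rightarrow> ('a \<times> 'b \<Rightarrow>\<^sub>0 'k)" where
  "tensor x y = bil_ext (\<lambda>a b. basis (a, b)) x y"

definition tmap :: "(('a \<Rightarrow>\<^sub>0 'k::comm_ring_1) \<Rightarrow> ('c \<Rightarrow>\<^sub>0 'k)) \<Rightarrow> (('b \<Rightarrow>\<^sub>0 'k) \<Rightarrow> ('d \<Rightarrow>\<^sub>0 'k))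
    \<Rightarrow> ('a \<times> 'b \<Rightarrow>\<^sub>0 'k) \<Rightarrow> ('c \<times> 'd \<Rightarrow>\<^sub>0 'k)" where
  "tmap f g = lin_ext (\<lambda>(a, b). tensor (f (basis a)) (g (basis b)))"

definition reassoc :: "(('a \<times> 'b) \<times> 'c \<Rightarrow>\<^sub>0 'k::comm_ring_1) \<Rightarrow> ('a \<times> ('b \<times> 'c) \<Rightarrow>\<^sub>0 'k)" where
  "reassoc = lin_ext (\<lambda>((a, b), c). basis (a, (b, c)))"

definition hmult :: "(ntree \<Rightarrow>\<^sub>0 'k::comm_ring_1) \<Rightarrow> (ntree \<Rightarrow>\<^sub>0 'k) \<Rightarrow> (ntree \<Rightarrow>\<^sub>0 'k)" where
  "hmult = bil_ext (\<lambda>t w. basis (slash t w))"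

definition hunit :: "ntree \<Rightarrow>\<^sub>0 'k::comm_ring_1" where
  "hunit = basis odot"

definition cop_basis :: "ntree \<Rightarrow> (ntree \<times> ntree \<Rightarrow>\<^sub>0 'k::comm_ring_1)" where
  "cop_basis t = (\<Sum>k\<in>{0..deg t}. basis (seg_lo t k, seg_hi t k))"

definition cop :: "(ntree \<Rightarrow>\<^sub>0 'k::comm_ring_1) \<Rightarrow> (ntree \<times> ntree \<Rightarrow>\<^sub>0 'k)" where
  "cop = lin_ext cop_basis"

definition counit :: "(ntree \<Rightarrow>\<^sub>0 'k::comm_ring_1) \<Rightarrow> 'k" where
  "counit x = Poly_Mapping.lookup x odot"

text \<open>(\<epsilon> \<otimes> id) and (id \<otimes> \<epsilon>), composed with K \<otimes> H \<cong> H \<cong> H \<otimes> K.\<close>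
definition counit_left :: "(ntree \<times> ntree \<Rightarrow>\<^sub>0 'k::comm_ring_1) \<Rightarrow> (ntree \<Rightarrow>\<^sub>0 'k)" where
  "counit_left = lin_ext (\<lambda>(a, b). smult (counit (basis a :: ntree \<Rightarrow>\<^sub>0 'k)) (basis b))"

definition counit_right :: "(ntree \<times> ntree \<Rightarrow>\<^sub>0 'k::comm_ring_1) \<Rightarrow> (ntree \<Rightarrow>\<^sub>0 'k)" where
  "counit_right = lin_ext (\<lambda>(a, b). smult (counit (basis b :: ntree \<Rightarrow>\<^sub>0 'k)) (basis a))"

definition tmult :: "(ntree \<times> ntree \<Rightarrow>\<^sub>0 'k::comm_ring_1) \<Rightarrow> (ntree \<times> ntree \<Rightarrow>\<^sub>0 'k)
    \<Rightarrow> (ntree \<times> ntree \<Rightarrow>\<^sub>0 'k)" where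
  "tmult = bil_ext (\<lambda>(a, b) (c, d). basis (slash a c, slash b d))"

definition Prim :: "(ntree \<Rightarrow>\<^sub>0 'k::comm_ring_1) set" where
  "Prim = {x. cop x = tensor hunit x + tensor x hunit}"

definition cat :: "(ntree list \<Rightarrow>\<^sub>0 'k::comm_ring_1) \<Rightarrow> (ntree list \<Rightarrow>\<^sub>0 'k) \<Rightarrow> (ntree list \<Rightarrow>\<^sub>0 'k)" where
  "cat = bil_ext (\<lambda>xs ys. basis (xs @ ys))"

definition decat :: "(ntree list \<Rightarrow>\<^sub>0 'k::comm_ring_1) \<Rightarrow> (ntree list \<times> ntree list \<Rightarrow>\<^sub>0 'k)" where
  "decat = lin_ext (\<lambda>xs. \<Sum>k\<in>{0..length xs}. basis (take k xs, drop k xs))"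

definition iota :: "(ntree \<Rightarrow>\<^sub>0 'k::comm_ring_1) \<Rightarrow> (ntree list \<Rightarrow>\<^sub>0 'k)" where
  "iota = lin_ext (\<lambda>a. basis [a])"

definition tens :: "(ntree \<Rightarrow>\<^sub>0 'k::comm_ring_1) list \<Rightarrow> (ntree list \<Rightarrow>\<^sub>0 'k)" where
  "tens vs = foldr (\<lambda>v acc. cat (iota v) acc) vs (basis [])"

definition tensor_alg :: "(ntree \<Rightarrow>\<^sub>0 'k::comm_ring_1) set \<Rightarrow> (ntree list \<Rightarrow>\<^sub>0 'k) set" where
  "tensor_alg V = {\<Sum>i<m. smult (c i) (tens (vs i)) | (m::nat) c vs. \<forall>i<m. set (vs i) \<subseteq> V}"

end

theory Submission
  imports Defs
begin


lemma lookup_smult[simp]: "Poly_Mapping.lookup (smult c p) a = c * Poly_Mapping.lookup p a"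
  unfolding smult_def by transfer (simp add: when_def)

lemma lookup_basis: "Poly_Mapping.lookup (basis a) b = (if a = b then 1 else 0)"
  unfolding basis_def by (simp add: lookup_single)

lemma smult_add_right: "smult c (x + y) = smult c x + smult c y"
  by (rule poly_mapping_eqI) (simp add: lookup_add distrib_left)
lemma smult_add_left: "smult (c + d) x = smult c x + smult d x"
  by (rule poly_mapping_eqI) (simp add: lookup_add distrib_right)
lemma smult_smult[simp]: "smult c (smult d x) = smult (c * d) x"
  by (rule poly_mapping_eqI) (simp add: mult.assoc)
lemma smult_zero_right[simp]: "smult c 0 = 0"
  by (rule poly_mapping_eqI) simp
lemma smult_zero_left[simp]: "smult 0 x = 0"
  by (rule poly_mapping_eqI) simp
lemma smult_one[simp]: "smult 1 x = x"
  by (rule poly_mapping_eqI) simp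
lemma smult_sum: "smult c (sum f S) = (\<Sum>a\<in>S. smult c (f a))"
  by (induction S rule: infinite_finite_induct) (auto simp: smult_add_right)
lemma smult_sum_left: "smult (sum f S) x = (\<Sum>a\<in>S. smult (f a) x)"
  by (induction S rule: infinite_finite_induct) (auto simp: smult_add_left)
lemma smult_minus_right: "smult c (x - y) = smult c x - smult c y"
  by (rule poly_mapping_eqI) (simp add: lookup_minus algebra_simps)
lemma smult_uminus_right: "smult c (- y) = - smult c y"
  by (rule poly_mapping_eqI) (simp add: algebra_simps)
lemma smult_minus_left: "smult (c - d) x = smult c x - smult d x"
  by (rule poly_mapping_eqI) (simp add: lookup_minus algebra_simps)
lemma smult_neg1: "smult (-1) x = - x"
  by (rule poly_mapping_eqI) simp

lemma lin_ext_superset: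
  assumes "finite S" "Poly_Mapping.keys x \<subseteq> S"
  shows "lin_ext f x = (\<Sum>a\<in>S. smult (Poly_Mapping.lookup x a) (f a))"
proof -
  have "(\<Sum>a\<in>S. smult (Poly_Mapping.lookup x a) (f a)) = (\<Sum>a\<in>Poly_Mapping.keys x. smult (Poly_Mapping.lookup x a) (f a))"
    using assms by (intro sum.mono_neutral_right) (auto simp: in_keys_iff)
  then show ?thesis by (simp add: lin_ext_def)
qed

lemma lin_ext_add: "lin_ext f (x + y) = lin_ext f x + lin_ext f y"
proof -
  let ?S = "Poly_Mapping.keys x \<union> Poly_Mapping.keys y"
  have "Poly_Mapping.keys (x + y) \<subseteq> ?S" by (rule keys_add)
  then show ?thesis
    by (simp add: lin_ext_superset[of ?S] lookup_add smult_add_left sum.distrib)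
qed

lemma lin_ext_smult: "lin_ext f (smult c x) = smult c (lin_ext f x)"
proof -
  have "lin_ext f (smult c x) = (\<Sum>a\<in>Poly_Mapping.keys x. smult (Poly_Mapping.lookup (smult c x) a) (f a))"
    by (rule lin_ext_superset) (auto simp: in_keys_iff)
  then show ?thesis by (simp add: lin_ext_def smult_sum)
qed

lemma lin_ext_basis[simp]: "lin_ext f (basis a :: 'a \<Rightarrow>\<^sub>0 'k::comm_ring_1) = f a"
  by (simp add: lin_ext_superset[of "{a}"] lookup_basis basis_def)

lemma lin_ext_zero[simp]: "lin_ext f 0 = 0"
  by (simp add: lin_ext_def)

lemma is_linear_lin_ext[intro]: "is_linear (lin_ext f)"
  by (simp add: is_linear_def lin_ext_add lin_ext_smult)

lemma expand_basis: "x = (\<Sum>a\<in>Poly_Mapping.keys x. smult (Poly_Mapping.lookup x a) (basis a))"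
  by (rule poly_mapping_eqI)
     (auto simp: lookup_sum lookup_basis in_keys_iff if_distrib cong: if_cong)

lemma lin_ext_basis_id: "lin_ext basis x = x"
  using expand_basis[of x] by (simp add: lin_ext_def)

lemma is_linear_zero: "is_linear F \<Longrightarrow> F 0 = 0"
  unfolding is_linear_def by (metis smult_zero_left)

lemma is_linear_sum: "is_linear F \<Longrightarrow> F (sum g S) = (\<Sum>a\<in>S. F (g a))"
  by (induction S rule: infinite_finite_induct) (auto simp: is_linear_zero is_linear_def)

lemma is_linear_smult: "is_linear F \<Longrightarrow> F (smult c x) = smult c (F x)"
  unfolding is_linear_def by blast
lemma is_linear_add: "is_linear F \<Longrightarrow> F (x + y) = F x + F y"
  unfolding is_linear_def by blast
lemma is_linear_minus: "is_linear F \<Longrightarrow> F (x - y) = F x - F y"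
proof -
  assume F: "is_linear F"
  have "F (x - y) = F (x + smult (-1) y)" by (simp add: smult_neg1)
  also have "\<dots> = F x + smult (-1) (F y)" using F by (simp add: is_linear_def)
  finally show ?thesis by (simp add: smult_neg1)
qed
lemma is_linear_uminus: "is_linear F \<Longrightarrow> F (- y) = - F y"
  using is_linear_minus[of F 0 y] by (simp add: is_linear_zero)

lemma is_linear_lin_ext_eq: "is_linear F \<Longrightarrow> F x = lin_ext (\<lambda>a. F (basis a)) x"
proof -
  assume F: "is_linear F"
  have "F x = F (\<Sum>a\<in>Poly_Mapping.keys x. smult (Poly_Mapping.lookup x a) (basis a))"
    by (subst expand_basis) (rule refl)
  also have "\<dots> = lin_ext (\<lambda>a. F (basis a)) x"
    using F by (simp add: is_linear_sum is_linear_smult lin_ext_def)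
  finally show ?thesis .
qed

lemma lin_eqI:
  assumes "is_linear F" "is_linear G" "\<And>a. F (basis a) = G (basis a)"
  shows "F x = G x"
proof -
  have "F x = lin_ext (\<lambda>a. F (basis a)) x" by (rule is_linear_lin_ext_eq[OF assms(1)])
  also have "\<dots> = lin_ext (\<lambda>a. G (basis a)) x" using assms(3) by simp
  also have "\<dots> = G x" by (rule is_linear_lin_ext_eq[OF assms(2), symmetric])
  finally show ?thesis .
qed

lemma lin_ext_cong: "(\<And>a. f a = g a) \<Longrightarrow> lin_ext f x = lin_ext g x"
  by (metis ext)

lemma is_linear_id[intro]: "is_linear (\<lambda>x. x)"
  by (simp add: is_linear_def)
lemma is_linear_const0[intro]: "is_linear (\<lambda>x. 0)"
  by (simp add: is_linear_def)
lemma is_linear_plus[intro]: "is_linear F \<Longrightarrow> is_linear G \<Longrightarrow> is_linear (\<lambda>x. F x + G x)"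
  by (simp add: is_linear_def smult_add_right)
lemma is_linear_diff[intro]: "is_linear F \<Longrightarrow> is_linear G \<Longrightarrow> is_linear (\<lambda>x. F x - G x)"
  by (simp add: is_linear_def smult_minus_right)
lemma is_linear_comp: "is_linear F \<Longrightarrow> is_linear G \<Longrightarrow> is_linear (\<lambda>x. F (G x))"
  by (simp add: is_linear_def)
lemma is_linear_comp_lin_ext[intro]: "is_linear G \<Longrightarrow> is_linear (\<lambda>x. lin_ext f (G x))"
  by (simp add: is_linear_def lin_ext_add lin_ext_smult)
lemma is_linear_smult_const[intro]: "is_linear G \<Longrightarrow> is_linear (\<lambda>x. smult c (G x))"
  by (simp add: is_linear_def smult_add_right mult.commute)
lemma is_linear_sum_fun[intro]: "(\<And>i. i \<in> S \<Longrightarrow> is_linear (F i)) \<Longrightarrow> is_linear (\<lambda>x. \<Sum>i\<in>S. F i x)"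
  by (induction S rule: infinite_finite_induct) auto

lemma bil_ext_lin: "bil_ext f x y = lin_ext (\<lambda>a. lin_ext (f a) y) x"
  by (simp add: bil_ext_def lin_ext_def smult_sum)

lemma bil_ext_lin2: "bil_ext f x y = lin_ext (\<lambda>b. lin_ext (\<lambda>a. f a b) x) y"
  unfolding bil_ext_def lin_ext_def
  by (subst sum.swap) (simp add: smult_sum mult.commute)

lemma bil_ext_basis[simp]: "bil_ext f (basis a :: 'a \<Rightarrow>\<^sub>0 'k::comm_ring_1) (basis b) = f a b"
  by (simp add: bil_ext_lin)

lemma is_linear_bil1[intro]: "is_linear G \<Longrightarrow> is_linear (\<lambda>x. bil_ext f (G x) y)"
  unfolding bil_ext_lin by (rule is_linear_comp_lin_ext)
lemma is_linear_bil2[intro]: "is_linear G \<Longrightarrow> is_linear (\<lambda>x. bil_ext f y (G x))"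
  unfolding bil_ext_lin2 by (rule is_linear_comp_lin_ext)

lemma bil_ext_add1: "bil_ext f (x + x') y = bil_ext f x y + bil_ext f x' y"
  by (simp add: bil_ext_lin lin_ext_add)
lemma bil_ext_add2: "bil_ext f y (x + x') = bil_ext f y x + bil_ext f y x'"
  by (simp add: bil_ext_lin2 lin_ext_add)
lemma bil_ext_smult1: "bil_ext f (smult c x) y = smult c (bil_ext f x y)"
  by (simp add: bil_ext_lin lin_ext_smult)
lemma bil_ext_smult2: "bil_ext f y (smult c x) = smult c (bil_ext f y x)"
  by (simp add: bil_ext_lin2 lin_ext_smult)

lemma bil_eqI:
  assumes "\<And>y. is_linear (\<lambda>x. F x y)" "\<And>y. is_linear (\<lambda>x. G x y)"
    "\<And>x. is_linear (\<lambda>y. F x y)" "\<And>x. is_linear (\<lambda>y. G x y)"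
    "\<And>a b. F (basis a) (basis b) = G (basis a) (basis b)"
  shows "F x y = G x y"
proof -
  have 1: "F (basis a) y = G (basis a) y" for a
    by (rule lin_eqI[where F="\<lambda>y. F (basis a) y" and G="\<lambda>y. G (basis a) y", OF assms(3) assms(4) assms(5)])
  show ?thesis
    by (rule lin_eqI[where F="\<lambda>x. F x y" and G="\<lambda>x. G x y", OF assms(1) assms(2) 1])
qed



lemma fpost_Nil[simp]: "fpost [] = []" by (simp add: fpost_def)
lemma fpost_Cons[simp]: "fpost (t # f) = post t @ fpost f" by (simp add: fpost_def)
lemma fpost_append[simp]: "fpost (f @ g) = fpost f @ fpost g" by (simp add: fpost_def)
lemma fpost_concat: "fpost (concat fs) = concat (map fpost fs)"
  by (induction fs) auto
lemma post_Nd[simp]: "post (Nd a ts) = fpost ts @ [a]" by (simp add: fpost_def)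
declare post.simps[simp del]

lemma frestr_Nil[simp]: "frestr P [] = []" by (simp add: frestr_def)
lemma frestr_Cons[simp]: "frestr P (t # f) = restr P t @ frestr P f" by (simp add: frestr_def)
lemma frestr_append: "frestr P (f @ g) = frestr P f @ frestr P g" by (simp add: frestr_def)
lemma restr_Nd[simp]: "restr P (Nd a ts) = (if a \<in> P then [Nd a (frestr P ts)] else frestr P ts)"
  by (simp add: frestr_def)
declare restr.simps[simp del]

lemma post_relab: "post (relab g t) = map g (post t)"
proof (induction t)
  case (Nd a ts)
  then have "fpost (map (relab g) ts) = map g (fpost ts)" by (induction ts) auto
  then show ?case by simp
qed
lemma fpost_relab: "fpost (map (relab g) f) = map g (fpost f)"
  by (induction f) (auto simp: post_relab)

lemma post_restr: "fpost (restr P t) = filter (\<lambda>a. a \<in> P) (post t)"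
proof (induction t)
  case (Nd a ts)
  then have "fpost (frestr P ts) = filter (\<lambda>a. a \<in> P) (fpost ts)" by (induction ts) auto
  then show ?case by simp
qed
lemma fpost_frestr: "fpost (frestr P f) = filter (\<lambda>a. a \<in> P) (fpost f)"
  by (induction f) (auto simp: post_restr)

lemma restr_cong: "(\<And>a. a \<in> set (post t) \<Longrightarrow> a \<in> P \<longleftrightarrow> a \<in> Q) \<Longrightarrow> restr P t = restr Q t"
proof (induction t)
  case (Nd a ts)
  then have "frestr P ts = frestr Q ts" by (induction ts) auto
  then show ?case using Nd.prems by simp
qed
lemma frestr_cong: "(\<And>a. a \<in> set (fpost f) \<Longrightarrow> a \<in> P \<longleftrightarrow> a \<in> Q) \<Longrightarrow> frestr P f = frestr Q f"
  by (induction f) (auto intro: restr_cong)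

lemma restr_all: "set (post t) \<subseteq> P \<Longrightarrow> restr P t = [t]"
proof (induction t)
  case (Nd a ts)
  then have "frestr P ts = ts" by (induction ts) auto
  then show ?case using Nd.prems by simp
qed
lemma frestr_all: "set (fpost f) \<subseteq> P \<Longrightarrow> frestr P f = f"
  by (induction f) (auto simp: restr_all)

lemma restr_none: "set (post t) \<inter> P = {} \<Longrightarrow> restr P t = []"
proof (induction t)
  case (Nd a ts)
  then have "frestr P ts = []" by (induction ts) auto
  then show ?case using Nd.prems by simp
qed
lemma frestr_none: "set (fpost f) \<inter> P = {} \<Longrightarrow> frestr P f = []"
  by (induction f) (simp_all add: restr_none Int_Un_distrib2)

lemma restr_relab: "restr Q (relab g t) = map (relab g) (restr {a. g a \<in> Q} t)"
proof (induction t)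
  case (Nd a ts)
  then have "frestr Q (map (relab g) ts) = map (relab g) (frestr {a. g a \<in> Q} ts)" by (induction ts) auto
  then show ?case by simp
qed
lemma frestr_relab: "frestr Q (map (relab g) f) = map (relab g) (frestr {a. g a \<in> Q} f)"
  by (induction f) (auto simp: restr_relab)

lemma restr_restr: "frestr P (restr Q t) = restr (P \<inter> Q) t"
proof (induction t)
  case (Nd a ts)
  then have "frestr P (frestr Q ts) = frestr (P \<inter> Q) ts" by (induction ts) (auto simp: frestr_append)
  then show ?case by auto
qed
lemma frestr_frestr: "frestr P (frestr Q f) = frestr (P \<inter> Q) f"
  by (induction f) (auto simp: frestr_append restr_restr)

lemma relab_cong: "(\<And>a. a \<in> set (post t) \<Longrightarrow> g a = h a) \<Longrightarrow> relab g t = relab h t"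
proof (induction t)
  case (Nd a ts)
  then have "map (relab g) ts = map (relab h) ts" by (induction ts) auto
  then show ?case using Nd.prems by simp
qed
lemma map_relab_cong: "(\<And>a. a \<in> set (fpost f) \<Longrightarrow> g a = h a) \<Longrightarrow> map (relab g) f = map (relab h) f"
  by (induction f) (auto intro: relab_cong)
lemma relab_relab: "relab g (relab h t) = relab (\<lambda>a. g (h a)) t"
proof (induction t)
  case (Nd a ts)
  then have "map (relab g) (map (relab h) ts) = map (relab (\<lambda>a. g (h a))) ts" by (induction ts) auto
  then show ?case by simp
qed
lemma map_relab_relab: "map (relab g) (map (relab h) f) = map (relab (\<lambda>a. g (h a))) f"
  by (simp add: relab_relab)
lemma relab_id: "relab (\<lambda>a. a) t = t"
proof (induction t)
  case (Nd a ts)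
  then have "map (relab (\<lambda>a. a)) ts = ts" by (induction ts) auto
  then show ?case by simp
qed
lemma map_relab_id: "map (relab (\<lambda>a. a)) f = f"
  by (induction f) (auto simp: relab_id)


section \<open>ranks and standardization\<close>

definition rk :: "nat set \<Rightarrow> nat \<Rightarrow> nat" where
  "rk S a = card {b\<in>S. b \<le> a}"

lemma std_rk: "std f = map (relab (rk (set (fpost f)))) f"
  by (simp add: std_def rk_def[abs_def])

lemma rk_mono: "finite S \<Longrightarrow> a \<le> a' \<Longrightarrow> rk S a \<le> rk S a'"
  unfolding rk_def by (intro card_mono) auto

lemma rk_strict: assumes "finite S" "a < a'" "a' \<in> S" shows "rk S a < rk S a'"
proof -
  have sub: "{b\<in>S. b\<le>a} \<subseteq> {b\<in>S. b\<le>a'}" using assms by auto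
  have ne: "a' \<in> {b\<in>S. b\<le>a'}" "a' \<notin> {b\<in>S. b\<le>a}" using assms by auto
  have "{b\<in>S. b\<le>a} \<subset> {b\<in>S. b\<le>a'}" using sub ne by blast
  then show ?thesis unfolding rk_def by (rule psubset_card_mono[rotated]) (use assms in auto)
qed

lemma rk_pos: "finite S \<Longrightarrow> a \<in> S \<Longrightarrow> 1 \<le> rk S a"
  unfolding rk_def by (subgoal_tac "a \<in> {b\<in>S. b \<le> a}") (auto simp: Suc_le_eq card_gt_0_iff)

lemma rk_le: "finite S \<Longrightarrow> rk S a \<le> card S"
  unfolding rk_def by (intro card_mono) auto

lemma rk_inj: "finite S \<Longrightarrow> inj_on (rk S) S"
proof (rule inj_onI)
  fix a b assume "finite S" "a \<in> S" "b \<in> S" "rk S a = rk S b"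
  then show "a = b"
    by (metis less_irrefl_nat linorder_neqE_nat rk_strict)
qed

lemma rk_image: "finite S \<Longrightarrow> rk S ` S = {1..card S}"
proof -
  assume fin: "finite S"
  have sub: "rk S ` S \<subseteq> {1..card S}" using rk_pos[OF fin] rk_le[OF fin] by auto
  have "card (rk S ` S) = card S" using card_image[OF rk_inj[OF fin]] .
  then show ?thesis using sub by (intro card_subset_eq) auto
qed

lemma rk_interval: "a \<in> {1..n} \<Longrightarrow> rk {1..n} a = a"
proof -
  assume "a \<in> {1..n}"
  then have "{b\<in>{1..n}. b \<le> a} = {1..a}" by auto
  then show ?thesis by (simp add: rk_def)
qed

lemma fpost_std: "fpost (std f) = map (rk (set (fpost f))) (fpost f)"
  by (simp add: std_rk fpost_relab)

lemma length_fpost_std[simp]: "length (fpost (std f)) = length (fpost f)"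
  by (simp add: fpost_std)

lemma is_ntree_std: "distinct (fpost f) \<Longrightarrow> is_ntree (std f)"
  unfolding is_ntree_def fpost_std
  by (simp add: rk_image distinct_card)

lemma is_ntree_distinct: "is_ntree f \<Longrightarrow> distinct (fpost f)"
  unfolding is_ntree_def by (metis atLeastAtMost_iff card_atLeastAtMost card_distinct diff_Suc_1 le_add1 plus_1_eq_Suc)

lemma std_id: assumes "is_ntree f" shows "std f = f"
proof -
  have H: "set (fpost f) = {1..length (fpost f)}" using assms by (simp add: is_ntree_def)
  have "map (relab (rk (set (fpost f)))) f = map (relab (\<lambda>a. a)) f"
  proof (rule map_relab_cong)
    fix a assume "a \<in> set (fpost f)"
    then show "rk (set (fpost f)) a = a" using H rk_interval[of a "length (fpost f)"] by simp
  qed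
  then show ?thesis by (simp add: std_rk map_relab_id)
qed

lemma std_relab_mono:
  assumes fin: "finite T" and sub: "set (fpost f) \<subseteq> T"
    and mono: "\<And>a b. a \<in> T \<Longrightarrow> b \<in> T \<Longrightarrow> a < b \<Longrightarrow> g a < g b"
  shows "std (map (relab g) f) = std f"
proof -
  let ?S = "set (fpost f)"
  have inj: "inj_on g ?S" using mono sub by (metis inj_onI linorder_neqE_nat less_irrefl subsetD)
  have key: "rk (g ` ?S) (g a) = rk ?S a" if "a \<in> ?S" for a
  proof -
    have "{b \<in> g ` ?S. b \<le> g a} = g ` {b\<in>?S. b \<le> a}"
    proof
      show "{b \<in> g ` ?S. b \<le> g a} \<subseteq> g ` {b\<in>?S. b \<le> a}"
      proof
        fix y assume "y \<in> {b \<in> g ` ?S. b \<le> g a}"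
        then obtain b where b: "b \<in> ?S" "y = g b" "g b \<le> g a" by auto
        have "b \<le> a"
        proof (rule ccontr)
          assume "\<not> b \<le> a" then have "a < b" by simp
          then have "g a < g b" using mono sub b(1) that by blast
          then show False using b(3) by simp
        qed
        then show "y \<in> g ` {b\<in>?S. b \<le> a}" using b by auto
      qed
      show "g ` {b\<in>?S. b \<le> a} \<subseteq> {b \<in> g ` ?S. b \<le> g a}"
      proof
        fix y assume "y \<in> g ` {b\<in>?S. b \<le> a}"
        then obtain b where b: "b \<in> ?S" "y = g b" "b \<le> a" by auto
        have "g b \<le> g a"
        proof (cases "b = a")
          case False
          then have "b < a" using b(3) by simp
          then show ?thesis using mono[of b a] sub that b(1) by (meson less_imp_le subsetD)
        qed simp
        then show "y \<in> {b \<in> g ` ?S. b \<le> g a}" using b by auto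
      qed
    qed
    moreover have "card (g ` {b\<in>?S. b \<le> a}) = card {b\<in>?S. b \<le> a}"
      by (rule card_image) (rule inj_on_subset[OF inj], auto)
    ultimately show ?thesis by (simp add: rk_def)
  qed
  show ?thesis
    unfolding std_rk fpost_relab map_relab_relab set_map
    by (rule map_relab_cong) (simp add: key)
qed

lemma std_std: "std (std f) = std f"
proof -
  have "std (map (relab (rk (set (fpost f)))) f) = std f"
    by (rule std_relab_mono[where T="set (fpost f)"]) (auto intro: rk_strict)
  then show ?thesis by (simp add: std_rk[of f])
qed

lemma std_Nil[simp]: "std [] = []" by (simp add: std_def)

lemma std_shift: "std (shift m f) = std f"
  unfolding shift_def by (rule std_relab_mono[where T="set (fpost f)"]) auto


lemma std_append:
  assumes lt: "\<And>a b. a \<in> set (fpost X) \<Longrightarrow> b \<in> set (fpost Y) \<Longrightarrow> a < b"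
  shows "std (X @ Y) = std X @ shift (card (set (fpost X))) (std Y)"
proof -
  let ?SX = "set (fpost X)" and ?SY = "set (fpost Y)"
  let ?S = "?SX \<union> ?SY"
  have 1: "rk ?S a = rk ?SX a" if "a \<in> ?SX" for a
  proof -
    have "{b\<in>?S. b \<le> a} = {b\<in>?SX. b \<le> a}" using lt that by fastforce
    then show ?thesis by (simp add: rk_def)
  qed
  have 2: "rk ?S a = rk ?SY a + card ?SX" if "a \<in> ?SY" for a
  proof -
    have "{b\<in>?S. b \<le> a} = ?SX \<union> {b\<in>?SY. b \<le> a}" using lt that by fastforce
    moreover have "?SX \<inter> {b\<in>?SY. b \<le> a} = {}" using lt by fastforce
    ultimately show ?thesis by (simp add: rk_def card_Un_disjoint)
  qed
  have "map (relab (rk ?S)) X = map (relab (rk ?SX)) X"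
    by (rule map_relab_cong) (simp add: 1)
  moreover have "map (relab (rk ?S)) Y = map (relab (\<lambda>a. rk ?SY a + card ?SX)) Y"
    by (rule map_relab_cong) (simp add: 2)
  ultimately show ?thesis
    by (simp add: std_rk[of "X @ Y"] std_rk[of X] std_rk[of Y] shift_def map_relab_relab relab_relab)
qed

section \<open>segments\<close>

definition sg :: "rtree \<Rightarrow> nat set \<Rightarrow> rtree" where
  "sg f S = std (frestr S f)"

lemma sg_cong: "(\<And>a. a \<in> set (fpost f) \<Longrightarrow> a \<in> P \<longleftrightarrow> a \<in> Q) \<Longrightarrow> sg f P = sg f Q"
  unfolding sg_def by (metis frestr_cong)

lemma set_fpost_frestr: "set (fpost (frestr S f)) = S \<inter> set (fpost f)"
  by (auto simp: fpost_frestr)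

lemma sg_sg: "sg (sg f S) Q = sg f (S \<inter> {a. rk (S \<inter> set (fpost f)) a \<in> Q})"
proof -
  let ?X = "frestr S f"
  let ?g = "rk (set (fpost ?X))"
  have "sg (sg f S) Q = std (frestr Q (map (relab ?g) ?X))"
    by (simp add: sg_def std_rk[of ?X])
  also have "\<dots> = std (map (relab ?g) (frestr {a. ?g a \<in> Q} ?X))"
    by (simp add: frestr_relab)
  also have "\<dots> = std (frestr {a. ?g a \<in> Q} ?X)"
    by (rule std_relab_mono[where T="set (fpost ?X)"]) (auto simp: fpost_frestr intro: rk_strict)
  also have "\<dots> = std (frestr ({a. ?g a \<in> Q} \<inter> S) f)"
    by (simp add: frestr_frestr)
  finally show ?thesis
    unfolding sg_def set_fpost_frestr by (metis Int_commute)
qed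

definition pos :: "nat list \<Rightarrow> nat \<Rightarrow> nat \<Rightarrow> nat set" where
  "pos L i j = set (take (j - i) (drop i L))"

definition seg :: "rtree \<Rightarrow> nat \<Rightarrow> nat \<Rightarrow> rtree" where
  "seg f i j = sg f (pos (fpost f) i j)"

lemma filter_mid:
  assumes "distinct L"
  shows "filter (\<lambda>x. x \<in> set (take k (drop i L))) L = take k (drop i L)"
proof -
  let ?A = "take i L" and ?B = "take k (drop i L)" and ?C = "drop k (drop i L)"
  have L: "L = ?A @ ?B @ ?C" by (metis append_take_drop_id)
  have d: "distinct (?A @ ?B @ ?C)" using assms L by metis
  have "filter (\<lambda>x. x \<in> set ?B) ?A = []" using d by (auto simp: filter_empty_conv)
  moreover have "filter (\<lambda>x. x \<in> set ?B) ?C = []" using d by (auto simp: filter_empty_conv)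
  moreover have "filter (\<lambda>x. x \<in> set ?B) ?B = ?B" by simp
  ultimately show ?thesis by (subst L) (simp only: filter_append, simp)
qed

lemma pos_sub: "pos L i j \<subseteq> set L"
  unfolding pos_def by (meson in_set_dropD in_set_takeD subsetI)

lemma fpost_seg:
  assumes "distinct (fpost f)"
  shows "fpost (seg f i j) = map (rk (pos (fpost f) i j)) (take (j - i) (drop i (fpost f)))"
proof -
  have "fpost (frestr (pos (fpost f) i j) f) = take (j - i) (drop i (fpost f))"
    unfolding fpost_frestr pos_def using filter_mid[OF assms] by simp
  then show ?thesis by (simp add: seg_def sg_def fpost_std pos_def)
qed

lemma distinct_fpost_seg: "distinct (fpost f) \<Longrightarrow> distinct (fpost (seg f i j))"
  using is_ntree_std is_ntree_distinct unfolding seg_def sg_def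
  by (metis distinct_filter fpost_frestr)

lemma is_ntree_seg: "distinct (fpost f) \<Longrightarrow> is_ntree (seg f i j)"
  unfolding seg_def sg_def by (rule is_ntree_std) (simp add: fpost_frestr)

lemma length_fpost_seg: "distinct (fpost f) \<Longrightarrow> length (fpost (seg f i j)) = min (j - i) (length (fpost f) - i)"
  by (simp add: fpost_seg)

lemma seg_seg:
  assumes dist: "distinct (fpost f)" and bj: "b \<le> j - i"
  shows "seg (seg f i j) a b = seg f (i + a) (i + b)"
proof -
  let ?L = "fpost f"
  let ?K = "take (j - i) (drop i ?L)"
  let ?S = "pos ?L i j"
  let ?g = "rk ?S"
  let ?A = "set (take (b - a) (drop a ?K))"
  have S: "?S = set ?K" by (simp add: pos_def)
  have SL: "?S \<inter> set ?L = ?S" using pos_sub by blast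
  have M: "fpost (seg f i j) = map ?g ?K" using fpost_seg[OF dist] .
  have posM: "pos (fpost (seg f i j)) a b = ?g ` ?A"
    unfolding M pos_def by (simp add: drop_map take_map)
  have AS: "?A \<subseteq> ?S" unfolding S by (meson in_set_dropD in_set_takeD subsetI)
  have inj: "inj_on ?g ?S" by (rule rk_inj) (simp add: pos_def)
  have "seg (seg f i j) a b = sg (sg f ?S) (?g ` ?A)"
    by (simp add: seg_def[of "seg f i j"] posM) (simp add: seg_def)
  also have "\<dots> = sg f (?S \<inter> {x. ?g x \<in> ?g ` ?A})"
    by (simp add: sg_sg SL)
  also have "\<dots> = sg f ?A"
  proof (rule sg_cong)
    fix x assume "x \<in> set ?L"
    show "x \<in> ?S \<inter> {x. ?g x \<in> ?g ` ?A} \<longleftrightarrow> x \<in> ?A"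
      using AS inj by (auto simp: inj_on_image_mem_iff) (metis inj_onD subsetD)
  qed
  also have "?A = pos ?L (i + a) (i + b)"
  proof -
    have "take (b - a) (drop a ?K) = take (b - a) (drop (i + a) ?L)"
      using bj by (simp add: drop_take min_def add.commute)
    then show ?thesis by (simp add: pos_def)
  qed
  finally show ?thesis by (simp add: seg_def)
qed


lemma pos_nth:
  assumes "distinct L" "q < length L"
  shows "L ! q \<in> pos L i j \<longleftrightarrow> i \<le> q \<and> q < j"
proof
  assume "L ! q \<in> pos L i j"
  then obtain r where r: "r < length (take (j - i) (drop i L))" "take (j - i) (drop i L) ! r = L ! q"
    unfolding pos_def by (auto simp: in_set_conv_nth)
  then have "L ! (i + r) = L ! q" "i + r < length L" by auto
  then have "i + r = q" using assms nth_eq_iff_index_eq by blast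
  then show "i \<le> q \<and> q < j" using r by auto
next
  assume "i \<le> q \<and> q < j"
  then have "take (j - i) (drop i L) ! (q - i) = L ! q" "q - i < length (take (j - i) (drop i L))"
    using assms by auto
  then show "L ! q \<in> pos L i j" unfolding pos_def by (metis nth_mem)
qed

lemma frestr_shift: "frestr P (shift m B) = shift m (frestr {a. a + m \<in> P} B)"
  by (simp add: shift_def frestr_relab)

lemma fpost_shift: "fpost (shift m B) = map (\<lambda>a. a + m) (fpost B)"
  by (simp add: shift_def fpost_relab)

lemma seg_append:
  assumes A: "is_ntree A" and B: "is_ntree B" and m: "m = length (fpost A)"
  shows "seg (A @ shift m B) i j =
    seg A (min i m) (min j m) @ shift (length (fpost (seg A (min i m) (min j m)))) (seg B (i - m) (j - m))"
proof -
  let ?LA = "fpost A" and ?LB = "fpost B"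
  let ?L = "?LA @ map (\<lambda>a. a + m) ?LB"
  have dA: "distinct ?LA" and dB: "distinct ?LB" using A B is_ntree_distinct by auto
  have sA: "set ?LA = {1..m}" using A m by (simp add: is_ntree_def)
  have sB: "set ?LB = {1..length ?LB}" using B by (simp add: is_ntree_def)
  have dL: "distinct ?L" using dA dB sA sB by (auto simp: distinct_map inj_on_def)
  have fL: "fpost (A @ shift m B) = ?L" by (simp add: fpost_shift)
  let ?P = "pos ?L i j"
  have 1: "frestr ?P A = frestr (pos ?LA (min i m) (min j m)) A"
  proof (rule frestr_cong)
    fix a assume "a \<in> set ?LA"
    then obtain q where q: "q < m" "a = ?LA ! q" using m by (auto simp: in_set_conv_nth)
    have "?L ! q = a" using q m by (simp add: nth_append)
    then have "a \<in> ?P \<longleftrightarrow> i \<le> q \<and> q < j" using pos_nth[OF dL, of q] q m by auto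
    moreover have "a \<in> pos ?LA (min i m) (min j m) \<longleftrightarrow> min i m \<le> q \<and> q < min j m"
      using pos_nth[OF dA, of q] q m by auto
    ultimately show "a \<in> ?P \<longleftrightarrow> a \<in> pos ?LA (min i m) (min j m)" using q by auto
  qed
  have 2: "frestr {a. a + m \<in> ?P} B = frestr (pos ?LB (i - m) (j - m)) B"
  proof (rule frestr_cong)
    fix b assume "b \<in> set ?LB"
    then obtain q where q: "q < length ?LB" "b = ?LB ! q" by (auto simp: in_set_conv_nth)
    have "?L ! (m + q) = b + m" using q m by (simp add: nth_append)
    then have "b + m \<in> ?P \<longleftrightarrow> i \<le> m + q \<and> m + q < j" using pos_nth[OF dL, of "m + q"] q m by auto
    moreover have "b \<in> pos ?LB (i - m) (j - m) \<longleftrightarrow> i - m \<le> q \<and> q < j - m"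
      using pos_nth[OF dB, of q] q by auto
    ultimately show "b \<in> {a. a + m \<in> ?P} \<longleftrightarrow> b \<in> pos ?LB (i - m) (j - m)" by auto
  qed
  let ?X = "frestr (pos ?LA (min i m) (min j m)) A"
  let ?Y = "frestr (pos ?LB (i - m) (j - m)) B"
  have "seg (A @ shift m B) i j = std (?X @ shift m ?Y)"
    unfolding seg_def sg_def fL frestr_append frestr_shift 1 2 ..
  also have "\<dots> = std ?X @ shift (card (set (fpost ?X))) (std (shift m ?Y))"
  proof (rule std_append)
    fix a b assume "a \<in> set (fpost ?X)" "b \<in> set (fpost (shift m ?Y))"
    then show "a < b" using sA sB by (auto simp: fpost_frestr fpost_shift)
  qed
  also have "card (set (fpost ?X)) = length (fpost (std ?X))"
    using dA by (simp add: fpost_frestr distinct_card[symmetric] del: set_filter)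
  finally show ?thesis by (simp add: std_shift seg_def sg_def)
qed

lemma rep_valid: "is_ntree (rep_nt t)"
  using rep_nt by simp

lemma rep_Abs: "is_ntree f \<Longrightarrow> rep_nt (Abs_nt f) = f"
  by (simp add: Abs_nt_inverse)

lemma rep_distinct: "distinct (fpost (rep_nt t))"
  by (rule is_ntree_distinct[OF rep_valid])

definition nseg :: "ntree \<Rightarrow> nat \<Rightarrow> nat \<Rightarrow> ntree" where
  "nseg t i j = Abs_nt (seg (rep_nt t) i j)"

lemma rep_nseg: "rep_nt (nseg t i j) = seg (rep_nt t) i j"
  unfolding nseg_def by (rule rep_Abs, rule is_ntree_seg, rule rep_distinct)

lemma deg_nseg: "deg (nseg t i j) = min (j - i) (deg t - i)"
  unfolding deg_def rep_nseg by (simp add: length_fpost_seg rep_distinct)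

lemma seg_lo_nseg: "seg_lo t k = nseg t 0 k"
  by (simp add: seg_lo_def nseg_def seg_def sg_def pos_def)

lemma seg_hi_nseg: "seg_hi t k = nseg t k (deg t)"
  by (simp add: seg_hi_def nseg_def seg_def sg_def pos_def deg_def)

lemma nseg_nseg: "b \<le> j - i \<Longrightarrow> nseg (nseg t i j) a b = nseg t (i + a) (i + b)"
  by (simp add: nseg_def[of "nseg t i j"] rep_nseg seg_seg rep_distinct) (simp add: nseg_def)

lemma ntree_eqI: "rep_nt t = rep_nt w \<Longrightarrow> t = w"
  by (simp add: rep_nt_inject)

lemma nseg_all: "nseg t 0 (deg t) = t"
proof (rule ntree_eqI)
  have "frestr (pos (fpost (rep_nt t)) 0 (deg t)) (rep_nt t) = rep_nt t"
    by (rule frestr_all) (simp add: pos_def deg_def)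
  then show "rep_nt (nseg t 0 (deg t)) = rep_nt t"
    by (simp add: rep_nseg seg_def sg_def std_id rep_valid)
qed

lemma rep_odot: "rep_nt odot = []"
  unfolding odot_def by (rule rep_Abs) (simp add: is_ntree_def)

lemma deg_zero_iff: "deg t = 0 \<longleftrightarrow> t = odot"
proof
  assume "deg t = 0"
  then have "fpost (rep_nt t) = []" by (simp add: deg_def)
  then have "rep_nt t = []" by (metis append_is_Nil_conv fpost_Cons neq_Nil_conv post_Nd ltree.exhaust)
  then show "t = odot" by (intro ntree_eqI) (simp add: rep_odot)
qed (simp add: deg_def rep_odot)

lemma deg_odot[simp]: "deg odot = 0" by (simp add: deg_zero_iff)

lemma nseg_empty: "i \<ge> j \<Longrightarrow> nseg t i j = odot"
  by (simp add: deg_zero_iff[symmetric] deg_nseg)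

lemma is_ntree_slash: "is_ntree (rep_nt t @ shift (deg t) (rep_nt w))"
proof -
  have a: "set (fpost (rep_nt t)) = {1..deg t}" using rep_valid[of t] by (simp add: is_ntree_def deg_def)
  have b: "set (fpost (rep_nt w)) = {1..deg w}" using rep_valid[of w] by (simp add: is_ntree_def deg_def)
  have "(\<lambda>a. a + deg t) ` {1..deg w} = {deg t + 1..deg t + deg w}"
    by (auto simp: image_iff)
  then show ?thesis using a b by (auto simp: is_ntree_def fpost_shift deg_def)
qed

lemma rep_slash: "rep_nt (slash t w) = rep_nt t @ shift (deg t) (rep_nt w)"
  unfolding slash_def by (rule rep_Abs, rule is_ntree_slash)

lemma deg_slash: "deg (slash t w) = deg t + deg w"
  by (simp add: deg_def rep_slash fpost_shift)

lemma nseg_slash: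
  "nseg (slash t w) i j = slash (nseg t (min i (deg t)) (min j (deg t))) (nseg w (i - deg t) (j - deg t))"
proof (rule ntree_eqI)
  show "rep_nt (nseg (slash t w) i j) = rep_nt (slash (nseg t (min i (deg t)) (min j (deg t))) (nseg w (i - deg t) (j - deg t)))"
    unfolding rep_nseg rep_slash
    by (subst seg_append) (auto simp: rep_valid deg_def rep_nseg)
qed

lemma shift_0: "shift 0 f = f" by (simp add: shift_def map_relab_id)
lemma shift_shift: "shift m (shift n f) = shift (m + n) f"
proof -
  have "(\<lambda>a. a + n + m) = (\<lambda>a. a + (m + n))" by (auto simp: fun_eq_iff)
  then show ?thesis by (simp add: shift_def relab_relab)
qed
lemma shift_append: "shift m (f @ g) = shift m f @ shift m g" by (simp add: shift_def)

lemma slash_assoc: "slash (slash t w) z = slash t (slash w z)"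
  by (rule ntree_eqI) (simp add: rep_slash deg_slash shift_append shift_shift)

lemma slash_odot_left[simp]: "slash odot w = w"
  by (rule ntree_eqI) (simp add: rep_slash rep_odot shift_0)

lemma slash_odot_right[simp]: "slash t odot = t"
  by (rule ntree_eqI) (simp add: rep_slash rep_odot shift_def)

lemma slash_eq_odot: "slash t w = odot \<longleftrightarrow> t = odot \<and> w = odot"
  by (simp add: deg_zero_iff[symmetric] deg_slash)



lemma hmult_basis[simp]: "hmult (basis a) (basis b) = (basis (slash a b) :: ntree \<Rightarrow>\<^sub>0 'k::comm_ring_1)"
  by (simp add: hmult_def)
lemma tensor_basis[simp]: "tensor (basis a) (basis b) = (basis (a, b) :: _ \<Rightarrow>\<^sub>0 'k::comm_ring_1)"
  by (simp add: tensor_def)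
lemma tmult_basis[simp]: "tmult (basis (a, b)) (basis (c, d)) = (basis (slash a c, slash b d) :: _ \<Rightarrow>\<^sub>0 'k::comm_ring_1)"
  by (simp add: tmult_def)
lemma cop_basis_eq: "cop (basis t) = (\<Sum>k\<in>{0..deg t}. basis (nseg t 0 k, nseg t k (deg t)) :: _ \<Rightarrow>\<^sub>0 'k::comm_ring_1)"
  by (simp add: cop_def cop_basis_def seg_lo_nseg seg_hi_nseg)
lemma counit_basis: "counit (basis a :: ntree \<Rightarrow>\<^sub>0 'k::comm_ring_1) = (if a = odot then 1 else 0)"
  by (simp add: counit_def lookup_basis)
lemma hunit_basis: "hunit = basis odot" by (simp add: hunit_def)

lemma lin_hmult1[intro]: "is_linear (\<lambda>x. hmult x y)" unfolding hmult_def by (intro is_linear_bil1 is_linear_id)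
lemma lin_hmult2[intro]: "is_linear (\<lambda>y. hmult x y)" unfolding hmult_def by (intro is_linear_bil2 is_linear_id)
lemma lin_tensor1[intro]: "is_linear (\<lambda>x. tensor x y)" unfolding tensor_def by (intro is_linear_bil1 is_linear_id)
lemma lin_tensor2[intro]: "is_linear (\<lambda>y. tensor x y)" unfolding tensor_def by (intro is_linear_bil2 is_linear_id)
lemma lin_tmult1[intro]: "is_linear (\<lambda>x. tmult x y)" unfolding tmult_def by (intro is_linear_bil1 is_linear_id)
lemma lin_tmult2[intro]: "is_linear (\<lambda>y. tmult x y)" unfolding tmult_def by (intro is_linear_bil2 is_linear_id)
lemma lin_cop[intro]: "is_linear cop" unfolding cop_def by (rule is_linear_lin_ext)
lemma lin_tmap[intro]: "is_linear (tmap f g)" unfolding tmap_def by (rule is_linear_lin_ext)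
lemma lin_reassoc[intro]: "is_linear reassoc" unfolding reassoc_def by (rule is_linear_lin_ext)
lemma lin_counit_left[intro]: "is_linear counit_left" unfolding counit_left_def by (rule is_linear_lin_ext)
lemma lin_counit_right[intro]: "is_linear counit_right" unfolding counit_right_def by (rule is_linear_lin_ext)

lemma counit_add: "counit (x + y) = counit x + counit y" by (simp add: counit_def lookup_add)
lemma counit_smult: "counit (smult c x) = c * counit x" by (simp add: counit_def)
lemma counit_sum: "counit (sum f S) = (\<Sum>a\<in>S. counit (f a))" by (simp add: counit_def lookup_sum)
lemma counit_diff: "counit (x - y) = counit x - counit y" by (simp add: counit_def lookup_minus)

lemma nseg_0_deg: "nseg t 0 k = odot \<longleftrightarrow> k = 0 \<or> deg t = 0"
  by (auto simp: deg_zero_iff[symmetric] deg_nseg min_def)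

lemma hmult_assoc: "hmult (hmult x y) z = hmult x (hmult y (z :: ntree \<Rightarrow>\<^sub>0 'k::comm_ring_1))"
proof -
  have "hmult (hmult (basis a) y) z = hmult (basis a) (hmult y z)" for a
  proof -
    have "hmult (hmult (basis a) (basis b)) z = hmult (basis a) (hmult (basis b) z)" for b
      by (rule lin_eqI[OF lin_hmult2 is_linear_comp[OF lin_hmult2 lin_hmult2]]) (simp add: slash_assoc)
    then show ?thesis
      by (rule lin_eqI[OF is_linear_comp[OF lin_hmult1 lin_hmult2] is_linear_comp[OF lin_hmult2 lin_hmult1]])
  qed
  then show ?thesis
    by (rule lin_eqI[OF is_linear_comp[OF lin_hmult1 lin_hmult1] lin_hmult1])
qed

lemma hmult_unit_left[simp]: "hmult hunit x = (x :: ntree \<Rightarrow>\<^sub>0 'k::comm_ring_1)"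
  by (rule lin_eqI[where F="\<lambda>x. hmult hunit x"]) (auto simp: hunit_basis)
lemma hmult_unit_right[simp]: "hmult x hunit = (x :: ntree \<Rightarrow>\<^sub>0 'k::comm_ring_1)"
  by (rule lin_eqI[where F="\<lambda>x. hmult x hunit"]) (auto simp: hunit_basis)


lemma lin_sum: "is_linear F \<Longrightarrow> F (\<Sum>a\<in>S. g a) = (\<Sum>a\<in>S. F (g a))"
  by (rule is_linear_sum)

lemma tri_sum:
  fixes g :: "nat \<Rightarrow> nat \<Rightarrow> 'a::comm_monoid_add"
  shows "(\<Sum>k\<in>{0..n}. \<Sum>j\<in>{0..k}. g j k) = (\<Sum>j\<in>{0..n}. \<Sum>l\<in>{0..n-j}. g j (j + l))"
proof -
  have "(\<Sum>k\<in>{0..n}. \<Sum>j\<in>{0..k}. g j k) = (\<Sum>(k,j)\<in>(SIGMA k:{0..n}. {0..k}). g j k)"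
    by (rule sum.Sigma) auto
  also have "\<dots> = (\<Sum>(j,l)\<in>(SIGMA j:{0..n}. {0..n-j}). g j (j + l))"
    by (rule sum.reindex_bij_witness[where j="\<lambda>(k,j). (j, k - j)" and i="\<lambda>(j,l). (j + l, j)"]) auto
  also have "\<dots> = (\<Sum>j\<in>{0..n}. \<Sum>l\<in>{0..n-j}. g j (j + l))"
    by (rule sum.Sigma[symmetric]) auto
  finally show ?thesis .
qed

lemma split_sum:
  fixes f :: "nat \<Rightarrow> 'a::comm_monoid_add"
  shows "(\<Sum>k\<in>{0..m+n}. f k) = (\<Sum>k\<in>{0..m}. f k) + (\<Sum>j\<in>{1..n}. f (m + j))"
  by (induction n) (simp_all add: sum.atLeast0_atMost_Suc add.assoc)

section \<open>coassociativity and counit\<close>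

lemma tmap_basis: "tmap f g (basis (a, b)) = tensor (f (basis a)) (g (basis b))"
  by (simp add: tmap_def)
lemma reassoc_basis[simp]: "reassoc (basis ((a, b), c)) = (basis (a, (b, c)) :: _ \<Rightarrow>\<^sub>0 'k::comm_ring_1)"
  by (simp add: reassoc_def)

lemma cop_coassoc_basis:
  "reassoc (tmap cop (\<lambda>z. z) (cop (basis t))) = tmap (\<lambda>z. z) cop (cop (basis t) :: _ \<Rightarrow>\<^sub>0 'k::comm_ring_1)"
proof -
  let ?n = "deg t"
  let ?B = "\<lambda>j k. basis (nseg t 0 j, (nseg t j k, nseg t k ?n)) :: _ \<Rightarrow>\<^sub>0 'k"
  have "reassoc (tmap cop (\<lambda>z. z) (cop (basis t))) =
      (\<Sum>k\<in>{0..?n}. reassoc (tensor (cop (basis (nseg t 0 k))) (basis (nseg t k ?n)) :: _ \<Rightarrow>\<^sub>0 'k))"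
    by (simp add: cop_basis_eq[of t] lin_sum[OF lin_tmap] lin_sum[OF lin_reassoc] tmap_basis)
  also have "\<dots> = (\<Sum>k\<in>{0..?n}. \<Sum>j\<in>{0..k}. ?B j k)"
  proof (rule sum.cong[OF refl])
    fix k assume k: "k \<in> {0..?n}"
    then have dk: "deg (nseg t 0 k) = k" by (simp add: deg_nseg)
    show "reassoc (tensor (cop (basis (nseg t 0 k))) (basis (nseg t k ?n))) = (\<Sum>j\<in>{0..k}. ?B j k)"
      unfolding cop_basis_eq dk
      by (simp add: lin_sum[OF lin_tensor1] lin_sum[OF lin_reassoc] nseg_nseg)
  qed
  also have "\<dots> = (\<Sum>j\<in>{0..?n}. \<Sum>l\<in>{0..?n-j}. ?B j (j + l))"
    by (rule tri_sum)
  also have "\<dots> = tmap (\<lambda>z. z) cop (cop (basis t))"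
  proof -
    have "tmap (\<lambda>z. z) cop (cop (basis t)) = (\<Sum>j\<in>{0..?n}. tensor (basis (nseg t 0 j)) (cop (basis (nseg t j ?n))) :: _ \<Rightarrow>\<^sub>0 'k)"
      by (simp add: cop_basis_eq[of t] lin_sum[OF lin_tmap] tmap_basis)
    also have "\<dots> = (\<Sum>j\<in>{0..?n}. \<Sum>l\<in>{0..?n-j}. ?B j (j + l))"
    proof (rule sum.cong[OF refl])
      fix j assume j: "j \<in> {0..?n}"
      then have dj: "deg (nseg t j ?n) = ?n - j" by (simp add: deg_nseg)
      show "tensor (basis (nseg t 0 j)) (cop (basis (nseg t j ?n))) = (\<Sum>l\<in>{0..?n-j}. ?B j (j + l))"
        unfolding cop_basis_eq dj using j
        by (simp add: lin_sum[OF lin_tensor2] nseg_nseg)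
    qed
    finally show ?thesis by simp
  qed
  finally show ?thesis .
qed

lemma cop_coassoc:
  "reassoc (tmap cop (\<lambda>z. z) (cop x)) = tmap (\<lambda>z. z) cop (cop (x :: _ \<Rightarrow>\<^sub>0 'k::comm_ring_1))"
  by (rule lin_eqI[where F="\<lambda>x. reassoc (tmap cop (\<lambda>z. z) (cop x))"])
     (auto intro!: is_linear_comp[OF lin_reassoc] is_linear_comp[OF lin_tmap] simp: cop_coassoc_basis)

lemma counit_left_basis[simp]: "counit_left (basis (a, b)) = smult (counit (basis a :: _ \<Rightarrow>\<^sub>0 'k::comm_ring_1)) (basis b)"
  by (simp add: counit_left_def)
lemma counit_right_basis[simp]: "counit_right (basis (a, b)) = smult (counit (basis b :: _ \<Rightarrow>\<^sub>0 'k::comm_ring_1)) (basis a)"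
  by (simp add: counit_right_def)

lemma counit_left_cop: "counit_left (cop x) = (x :: _ \<Rightarrow>\<^sub>0 'k::comm_ring_1)"
proof (rule lin_eqI[where F="\<lambda>x. counit_left (cop x)"])
  show "is_linear (\<lambda>x. counit_left (cop x))" by (intro is_linear_comp[OF lin_counit_left lin_cop])
  fix t
  have "counit_left (cop (basis t) :: _ \<Rightarrow>\<^sub>0 'k) = (\<Sum>k\<in>{0..deg t}. if k = 0 then basis (nseg t 0 (deg t)) else 0)"
    unfolding cop_basis_eq lin_sum[OF lin_counit_left]
    by (intro sum.cong) (auto simp: counit_basis nseg_0_deg)
  also have "\<dots> = basis t" by (simp add: nseg_all)
  finally show "counit_left (cop (basis t)) = (basis t :: _ \<Rightarrow>\<^sub>0 'k)" .
qed auto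

lemma counit_right_cop: "counit_right (cop x) = (x :: _ \<Rightarrow>\<^sub>0 'k::comm_ring_1)"
proof (rule lin_eqI[where F="\<lambda>x. counit_right (cop x)"])
  show "is_linear (\<lambda>x. counit_right (cop x))" by (intro is_linear_comp[OF lin_counit_right lin_cop])
  fix t
  have "counit_right (cop (basis t) :: _ \<Rightarrow>\<^sub>0 'k) = (\<Sum>k\<in>{0..deg t}. if k = deg t then basis (nseg t 0 (deg t)) else 0)"
    unfolding cop_basis_eq lin_sum[OF lin_counit_right]
    by (intro sum.cong) (auto simp: counit_basis deg_zero_iff[symmetric] deg_nseg)
  also have "\<dots> = basis t" by (simp add: nseg_all)
  finally show "counit_right (cop (basis t)) = (basis t :: _ \<Rightarrow>\<^sub>0 'k)" .
qed auto


section \<open>infinitesimal compatibility\<close>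

lemma nseg_zero_zero[simp]: "nseg t 0 0 = odot" by (simp add: nseg_empty)
lemma nseg_same[simp]: "nseg t i i = odot" by (simp add: nseg_empty)

lemma compat_basis:
  "cop (hmult (basis t) (basis w)) =
     tmult (cop (basis t)) (tensor hunit (basis w)) + tmult (tensor (basis t) hunit) (cop (basis w))
     - tensor (basis t) (basis w :: _ \<Rightarrow>\<^sub>0 'k::comm_ring_1)"
proof -
  let ?m = "deg t" and ?n = "deg w"
  let ?f = "\<lambda>k. basis (nseg (slash t w) 0 k, nseg (slash t w) k (?m + ?n)) :: _ \<Rightarrow>\<^sub>0 'k"
  have L: "cop (hmult (basis t) (basis w)) = (\<Sum>k\<in>{0..?m}. ?f k) + (\<Sum>j\<in>{1..?n}. ?f (?m + j))"
    by (simp add: cop_basis_eq deg_slash split_sum)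
  have 1: "(\<Sum>k\<in>{0..?m}. ?f k) = tmult (cop (basis t)) (tensor hunit (basis w))"
    unfolding cop_basis_eq[of t] lin_sum[OF lin_tmult1] hunit_basis tensor_basis
    by (intro sum.cong) (auto simp: nseg_slash nseg_all)
  have 2: "(\<Sum>j\<in>{1..?n}. ?f (?m + j)) + tensor (basis t) (basis w) =
      tmult (tensor (basis t) hunit) (cop (basis w))"
  proof -
    have "tmult (tensor (basis t) hunit) (cop (basis w)) =
        (\<Sum>j\<in>{0..?n}. basis (slash t (nseg w 0 j), nseg w j ?n) :: _ \<Rightarrow>\<^sub>0 'k)"
      unfolding cop_basis_eq[of w] lin_sum[OF lin_tmult2] hunit_basis tensor_basis by simp
    also have "\<dots> = basis (t, w) + (\<Sum>j\<in>{1..?n}. basis (slash t (nseg w 0 j), nseg w j ?n))"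
      by (simp add: sum.atLeast_Suc_atMost nseg_all)
    also have "(\<Sum>j\<in>{1..?n}. basis (slash t (nseg w 0 j), nseg w j ?n)) = (\<Sum>j\<in>{1..?n}. ?f (?m + j))"
      by (intro sum.cong) (auto simp: nseg_slash nseg_all)
    finally show ?thesis by (simp add: add.commute)
  qed
  show ?thesis using L 1 2 by (simp add: algebra_simps)
qed

lemma compat:
  "cop (hmult x y) = tmult (cop x) (tensor hunit y) + tmult (tensor x hunit) (cop y) - tensor x (y :: _ \<Rightarrow>\<^sub>0 'k::comm_ring_1)"
proof (rule bil_eqI[where F="\<lambda>x y. cop (hmult x y)"])
  fix y :: "_ \<Rightarrow>\<^sub>0 'k"
  show "is_linear (\<lambda>x. cop (hmult x y))" by (rule is_linear_comp[OF lin_cop lin_hmult1])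
  show "is_linear (\<lambda>x. tmult (cop x) (tensor hunit y) + tmult (tensor x hunit) (cop y) - tensor x y)"
    by (intro is_linear_diff is_linear_plus is_linear_comp[OF lin_tmult1 lin_cop]
        is_linear_comp[OF lin_tmult1 lin_tensor1] lin_tensor1)
next
  fix x :: "_ \<Rightarrow>\<^sub>0 'k"
  show "is_linear (\<lambda>y. cop (hmult x y))" by (rule is_linear_comp[OF lin_cop lin_hmult2])
  show "is_linear (\<lambda>y. tmult (cop x) (tensor hunit y) + tmult (tensor x hunit) (cop y) - tensor x y)"
    by (intro is_linear_diff is_linear_plus is_linear_comp[OF lin_tmult2 lin_cop]
        is_linear_comp[OF lin_tmult2 lin_tensor2] lin_tensor2)
qed (rule compat_basis)

lemma tmult_tensor: "tmult (tensor a b) (tensor c d) = tensor (hmult a c) (hmult b (d :: _ \<Rightarrow>\<^sub>0 'k::comm_ring_1))"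
proof -
  have 1: "tmult (tensor (basis a') (basis b')) (tensor c d) = tensor (hmult (basis a') c) (hmult (basis b') d)" for a' b'
  proof (rule bil_eqI[where F="\<lambda>c d. tmult (tensor (basis a') (basis b')) (tensor c d)"])
    fix d :: "_ \<Rightarrow>\<^sub>0 'k"
    show "is_linear (\<lambda>c. tmult (tensor (basis a') (basis b')) (tensor c d))"
      by (rule is_linear_comp[OF lin_tmult2 lin_tensor1])
    show "is_linear (\<lambda>c. tensor (hmult (basis a') c) (hmult (basis b') d))"
      by (rule is_linear_comp[OF lin_tensor1 lin_hmult2])
  next
    fix c :: "_ \<Rightarrow>\<^sub>0 'k"
    show "is_linear (\<lambda>d. tmult (tensor (basis a') (basis b')) (tensor c d))"
      by (rule is_linear_comp[OF lin_tmult2 lin_tensor2])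
    show "is_linear (\<lambda>d. tensor (hmult (basis a') c) (hmult (basis b') d))"
      by (rule is_linear_comp[OF lin_tensor2 lin_hmult2])
  qed simp
  show ?thesis
  proof (rule bil_eqI[where F="\<lambda>a b. tmult (tensor a b) (tensor c d)"])
    fix b :: "_ \<Rightarrow>\<^sub>0 'k"
    show "is_linear (\<lambda>a. tmult (tensor a b) (tensor c d))"
      by (rule is_linear_comp[OF lin_tmult1 lin_tensor1])
    show "is_linear (\<lambda>a. tensor (hmult a c) (hmult b d))"
      by (rule is_linear_comp[OF lin_tensor1 lin_hmult1])
  next
    fix a :: "_ \<Rightarrow>\<^sub>0 'k"
    show "is_linear (\<lambda>b. tmult (tensor a b) (tensor c d))"
      by (rule is_linear_comp[OF lin_tmult1 lin_tensor2])
    show "is_linear (\<lambda>b. tensor (hmult a c) (hmult b d))"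
      by (rule is_linear_comp[OF lin_tensor2 lin_hmult1])
  qed (rule 1)
qed

lemma keys_sum_sub: "Poly_Mapping.keys (sum f S) \<subseteq> (\<Union>a\<in>S. Poly_Mapping.keys (f a))"
proof (induction S rule: infinite_finite_induct)
  case (insert x F)
  then show ?case using keys_add[of "f x" "sum f F"] by auto
qed auto

lemma keys_basis: "Poly_Mapping.keys (basis a :: _ \<Rightarrow>\<^sub>0 'k::comm_ring_1) = {a}"
  by (simp add: basis_def)

lemma cop_graded: "p \<in> Poly_Mapping.keys (cop (basis t) :: _ \<Rightarrow>\<^sub>0 'k::comm_ring_1) \<Longrightarrow> deg (fst p) + deg (snd p) = deg t"
  using keys_sum_sub[of "\<lambda>k. basis (nseg t 0 k, nseg t k (deg t)) :: _ \<Rightarrow>\<^sub>0 'k" "{0..deg t}"]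
  by (auto simp: cop_basis_eq keys_basis deg_nseg)



lemma lookup_lin_ext: "Poly_Mapping.lookup (lin_ext f x) c = (\<Sum>a\<in>Poly_Mapping.keys x. Poly_Mapping.lookup x a * Poly_Mapping.lookup (f a) c)"
  by (simp add: lin_ext_def lookup_sum)

lemma lookup_bil_ext: "Poly_Mapping.lookup (bil_ext f x y) c =
   (\<Sum>a\<in>Poly_Mapping.keys x. \<Sum>b\<in>Poly_Mapping.keys y. Poly_Mapping.lookup x a * Poly_Mapping.lookup y b * Poly_Mapping.lookup (f a b) c)"
  by (simp add: bil_ext_def lookup_sum)

lemma sum_keys_delta: "(\<Sum>a\<in>Poly_Mapping.keys (x :: _ \<Rightarrow>\<^sub>0 'k::comm_ring_1). Poly_Mapping.lookup x a * (if a = c then d else 0)) = Poly_Mapping.lookup x c * d"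
proof -
  have "(\<Sum>a\<in>Poly_Mapping.keys x. Poly_Mapping.lookup x a * (if a = c then d else 0)) =
        (\<Sum>a\<in>Poly_Mapping.keys x. if a = c then Poly_Mapping.lookup x c * d else 0)"
    by (intro sum.cong) auto
  also have "\<dots> = (if c \<in> Poly_Mapping.keys x then Poly_Mapping.lookup x c * d else 0)"
    by (simp add: sum.delta)
  also have "\<dots> = Poly_Mapping.lookup x c * d" by (auto simp: in_keys_iff)
  finally show ?thesis .
qed

lemma counit_mult: "counit (hmult x y) = counit x * counit (y :: _ \<Rightarrow>\<^sub>0 'k::comm_ring_1)"
proof -
  have "counit (hmult x y) = (\<Sum>a\<in>Poly_Mapping.keys x. Poly_Mapping.lookup x a *
     (if a = odot then (\<Sum>b\<in>Poly_Mapping.keys y. Poly_Mapping.lookup y b * (if b = odot then 1 else 0)) else 0))"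
    unfolding counit_def hmult_def lookup_bil_ext
    by (intro sum.cong refl) (auto simp: lookup_basis slash_eq_odot sum_distrib_left mult.assoc intro!: sum.cong)
  then show ?thesis by (simp add: sum_keys_delta counit_def)
qed

lemma lin_counit_smult[intro]: "is_linear (\<lambda>x. smult (counit x) (y :: _ \<Rightarrow>\<^sub>0 'k::comm_ring_1))"
  by (simp add: is_linear_def counit_add counit_smult smult_add_left)

lemma counit_hunit[simp]: "counit (hunit :: _ \<Rightarrow>\<^sub>0 'k::comm_ring_1) = 1"
  by (simp add: hunit_basis counit_basis)

lemma counit_left_tensor: "counit_left (tensor x y) = smult (counit x) (y :: _ \<Rightarrow>\<^sub>0 'k::comm_ring_1)"
proof (rule bil_eqI[where F="\<lambda>x y. counit_left (tensor x y)"])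
  fix y :: "_ \<Rightarrow>\<^sub>0 'k"
  show "is_linear (\<lambda>x. counit_left (tensor x y))" by (rule is_linear_comp[OF lin_counit_left lin_tensor1])
  show "is_linear (\<lambda>x. smult (counit x) y)" by (rule lin_counit_smult)
next
  fix x :: "_ \<Rightarrow>\<^sub>0 'k"
  show "is_linear (\<lambda>y. counit_left (tensor x y))" by (rule is_linear_comp[OF lin_counit_left lin_tensor2])
  show "is_linear (\<lambda>y. smult (counit x) y)" by (rule is_linear_smult_const[OF is_linear_id])
qed simp

lemma Prim_counit: assumes "v \<in> Prim" shows "counit (v :: _ \<Rightarrow>\<^sub>0 'k::field) = 0"
proof -
  have "v = counit_left (cop v)" by (simp add: counit_left_cop)
  also have "\<dots> = counit_left (tensor hunit v) + counit_left (tensor v hunit)"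
    using assms by (simp add: Prim_def is_linear_add[OF lin_counit_left])
  also have "\<dots> = v + smult (counit v) hunit" by (simp add: counit_left_tensor)
  finally have "smult (counit v) hunit = (0 :: _ \<Rightarrow>\<^sub>0 'k)" by simp
  then have "Poly_Mapping.lookup (smult (counit v) hunit) odot = (0::'k)" by simp
  then show ?thesis by (simp add: hunit_basis lookup_basis)
qed

lemma Prim_mult: assumes "v \<in> Prim"
  shows "cop (hmult v h) = tensor hunit (hmult v h) + tmult (tensor v hunit) (cop (h :: _ \<Rightarrow>\<^sub>0 'k::comm_ring_1))"
proof -
  have cv: "cop v = tensor hunit v + tensor v hunit" using assms by (simp add: Prim_def)
  have "tmult (cop v) (tensor hunit h) = tensor hunit (hmult v h) + tensor v h"
    unfolding cv is_linear_add[OF lin_tmult1] tmult_tensor by simp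
  then show ?thesis by (simp add: compat)
qed

lemma hmult_zero_left[simp]: "hmult 0 x = (0 :: _ \<Rightarrow>\<^sub>0 'k::comm_ring_1)"
  by (rule is_linear_zero[OF lin_hmult1])
lemma hmult_zero_right[simp]: "hmult x 0 = (0 :: _ \<Rightarrow>\<^sub>0 'k::comm_ring_1)"
  by (rule is_linear_zero[OF lin_hmult2])
lemma tensor_zero_left[simp]: "tensor 0 x = (0 :: _ \<Rightarrow>\<^sub>0 'k::comm_ring_1)"
  by (rule is_linear_zero[OF lin_tensor1])
lemma tensor_zero_right[simp]: "tensor x 0 = (0 :: _ \<Rightarrow>\<^sub>0 'k::comm_ring_1)"
  by (rule is_linear_zero[OF lin_tensor2])

lemma tmult_tensor_basis: "tmult (tensor x hunit) (basis (a, b)) = tensor (hmult x (basis a)) (basis b :: _ \<Rightarrow>\<^sub>0 'k::comm_ring_1)"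
  by (metis tensor_basis tmult_tensor hmult_unit_left)

section \<open>the idempotent e\<close>

function e :: "ntree \<Rightarrow> (ntree \<Rightarrow>\<^sub>0 'k::comm_ring_1)" where
  "e t = (if deg t = 0 then 0 else basis t - (\<Sum>k\<in>{1..<deg t}. hmult (e (nseg t 0 k)) (basis (nseg t k (deg t)))))"
  by auto
termination by (relation "measure deg") (auto simp: deg_nseg)

declare e.simps[simp del]

lemma e_odot[simp]: "e odot = 0" by (simp add: e.simps)

lemma sum_ends:
  fixes f :: "nat \<Rightarrow> 'a::comm_monoid_add"
  assumes "1 \<le> n"
  shows "(\<Sum>k\<in>{0..n}. f k) = f 0 + (\<Sum>k\<in>{1..<n}. f k) + f n"
proof -
  from assms obtain n' where n: "n = Suc n'" by (cases n) auto
  have "(\<Sum>k\<in>{0..n}. f k) = f 0 + (\<Sum>k\<in>{Suc 0..n}. f k)" by (simp add: sum.atLeast_Suc_atMost)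
  also have "(\<Sum>k\<in>{Suc 0..n}. f k) = (\<Sum>k\<in>{1..<n}. f k) + f n"
    unfolding n by (simp add: atLeastLessThanSuc_atLeastAtMost[symmetric] sum.atLeastLessThan_Suc)
  finally show ?thesis by (simp add: add.assoc)
qed

lemma E3_basis:
  assumes "1 \<le> deg t"
  shows "(\<Sum>k\<in>{0..deg t}. hmult (e (nseg t 0 k)) (basis (nseg t k (deg t)))) = (basis t :: _ \<Rightarrow>\<^sub>0 'k::comm_ring_1)"
proof -
  have et: "(e t :: _ \<Rightarrow>\<^sub>0 'k) = basis t - (\<Sum>k\<in>{1..<deg t}. hmult (e (nseg t 0 k)) (basis (nseg t k (deg t))))"
    using assms by (simp add: e.simps[of t])
  show ?thesis using assms
    by (simp add: sum_ends nseg_all et hunit_basis[symmetric])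
qed

definition Mop :: "(ntree \<times> ntree \<Rightarrow>\<^sub>0 'k::comm_ring_1) \<Rightarrow> (ntree \<Rightarrow>\<^sub>0 'k)" where
  "Mop = lin_ext (\<lambda>(a, b). hmult (e a) (basis b))"

definition E :: "(ntree \<Rightarrow>\<^sub>0 'k::comm_ring_1) \<Rightarrow> (ntree \<Rightarrow>\<^sub>0 'k)" where
  "E = lin_ext e"

lemma lin_Mop[intro]: "is_linear Mop" by (simp add: Mop_def is_linear_lin_ext)
lemma lin_E[intro]: "is_linear E" by (simp add: E_def is_linear_lin_ext)
lemma E_basis[simp]: "E (basis t) = e t" by (simp add: E_def)
lemma E_hunit[simp]: "E hunit = 0" by (simp add: hunit_basis)

lemma Mop_tensor: "Mop (tensor x y) = hmult (E x) (y :: _ \<Rightarrow>\<^sub>0 'k::comm_ring_1)"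
proof (rule bil_eqI[where F="\<lambda>x y. Mop (tensor x y)"])
  fix y :: "_ \<Rightarrow>\<^sub>0 'k"
  show "is_linear (\<lambda>x. Mop (tensor x y))" by (rule is_linear_comp[OF lin_Mop lin_tensor1])
  show "is_linear (\<lambda>x. hmult (E x) y)" by (rule is_linear_comp[OF lin_hmult1 lin_E])
next
  fix x :: "_ \<Rightarrow>\<^sub>0 'k"
  show "is_linear (\<lambda>y. Mop (tensor x y))" by (rule is_linear_comp[OF lin_Mop lin_tensor2])
  show "is_linear (\<lambda>y. hmult (E x) y)" by (rule lin_hmult2)
qed (simp add: Mop_def)

lemma Mop_cop: "Mop (cop x) = x - smult (counit x) (hunit :: _ \<Rightarrow>\<^sub>0 'k::comm_ring_1)"
proof (rule lin_eqI[where F="\<lambda>x. Mop (cop x)"])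
  show "is_linear (\<lambda>x. Mop (cop x))" by (rule is_linear_comp[OF lin_Mop lin_cop])
  show "is_linear (\<lambda>x. x - smult (counit x) (hunit :: _ \<Rightarrow>\<^sub>0 'k))" by (intro is_linear_diff is_linear_id lin_counit_smult)
  fix t
  show "Mop (cop (basis t)) = basis t - smult (counit (basis t)) (hunit :: _ \<Rightarrow>\<^sub>0 'k)"
  proof (cases "deg t = 0")
    case True
    then have t: "t = odot" by (simp add: deg_zero_iff)
    show ?thesis by (simp add: t cop_basis_eq Mop_def counit_basis hunit_basis)
  next
    case False
    then have "Mop (cop (basis t)) = (basis t :: _ \<Rightarrow>\<^sub>0 'k)"
      using E3_basis[of t] unfolding cop_basis_eq lin_sum[OF lin_Mop] by (simp add: Mop_def)
    then show ?thesis using False by (simp add: counit_basis deg_zero_iff)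
  qed
qed

lemma E_prim: assumes "v \<in> Prim" shows "E v = (v :: _ \<Rightarrow>\<^sub>0 'k::field)"
proof -
  have "v = Mop (cop v)" using Mop_cop[of v] Prim_counit[OF assms] by simp
  also have "\<dots> = E v" using assms by (simp add: Prim_def is_linear_add[OF lin_Mop] Mop_tensor)
  finally show ?thesis by simp
qed

lemma E_prim_mult_basis:
  assumes v: "v \<in> Prim"
  shows "1 \<le> deg w \<Longrightarrow> E (hmult v (basis w)) = (0 :: _ \<Rightarrow>\<^sub>0 'k::field)"
proof (induction w rule: measure_induct_rule[where f=deg])
  case (less w)
  let ?n = "deg w"
  let ?x = "hmult v (basis w) :: _ \<Rightarrow>\<^sub>0 'k"
  have c0: "counit ?x = 0" by (simp add: counit_mult Prim_counit[OF v])
  have "?x = Mop (cop ?x)" using Mop_cop[of ?x] c0 by simp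
  also have "\<dots> = (\<Sum>j\<in>{0..?n}. hmult (E (hmult v (basis (nseg w 0 j)))) (basis (nseg w j ?n)))"
    unfolding Prim_mult[OF v] is_linear_add[OF lin_Mop] Mop_tensor cop_basis_eq lin_sum[OF lin_tmult2]
      tmult_tensor_basis lin_sum[OF lin_Mop] by simp
  also have "\<dots> = ?x + E ?x"
  proof -
    have mid: "(\<Sum>j\<in>{1..<?n}. hmult (E (hmult v (basis (nseg w 0 j)))) (basis (nseg w j ?n))) = 0"
    proof (intro sum.neutral ballI)
      fix j assume j: "j \<in> {1..<?n}"
      then have "deg (nseg w 0 j) = j" by (simp add: deg_nseg)
      then have "E (hmult v (basis (nseg w 0 j))) = (0 :: _ \<Rightarrow>\<^sub>0 'k)" using less.IH[of "nseg w 0 j"] j by auto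
      then show "hmult (E (hmult v (basis (nseg w 0 j)))) (basis (nseg w j ?n)) = 0"
        by (simp add: is_linear_zero[OF lin_hmult1])
    qed
    have "(\<Sum>j\<in>{0..?n}. hmult (E (hmult v (basis (nseg w 0 j)))) (basis (nseg w j ?n))) =
       hmult (E (hmult v (basis (nseg w 0 0)))) (basis (nseg w 0 ?n)) + (\<Sum>j\<in>{1..<?n}. hmult (E (hmult v (basis (nseg w 0 j)))) (basis (nseg w j ?n)))
       + hmult (E (hmult v (basis (nseg w 0 ?n)))) (basis (nseg w ?n ?n))"
      by (rule sum_ends) (use less.prems in simp)
    then show ?thesis
      by (simp only: mid) (simp add: nseg_all hunit_basis[symmetric] E_prim[OF v] add.commute)
  qed
  finally show ?case by simp
qed

lemma E_prim_mult: assumes v: "v \<in> Prim" shows "E (hmult v h) = smult (counit h) (v :: _ \<Rightarrow>\<^sub>0 'k::field)"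
proof (rule lin_eqI[where F="\<lambda>h. E (hmult v h)"])
  show "is_linear (\<lambda>h. E (hmult v h))" by (rule is_linear_comp[OF lin_E lin_hmult2])
  show "is_linear (\<lambda>h. smult (counit h) v)" by (rule lin_counit_smult)
  fix w
  show "E (hmult v (basis w)) = smult (counit (basis w)) v"
  proof (cases "deg w = 0")
    case True
    then show ?thesis by (simp add: deg_zero_iff counit_basis hunit_basis[symmetric] E_prim[OF v])
  next
    case False
    then have "1 \<le> deg w" by simp
    then show ?thesis using E_prim_mult_basis[OF v, of w] False by (simp add: counit_basis deg_zero_iff)
  qed
qed


lemma shift_sum:
  fixes g :: "nat \<Rightarrow> 'a::comm_monoid_add"
  assumes "k \<le> n"
  shows "(\<Sum>j\<in>{0..n-k}. g (k + j)) = (\<Sum>l\<in>{k..n}. g l)"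
proof -
  have "(\<Sum>l\<in>{0+k..(n-k)+k}. g l) = (\<Sum>j\<in>{0..n-k}. g (j + k))" by (rule sum.shift_bounds_cl_nat_ivl)
  then show ?thesis using assms by (simp add: add.commute)
qed

lemma e_prim: "1 \<le> deg t \<Longrightarrow> (e t :: _ \<Rightarrow>\<^sub>0 'k::field) \<in> Prim"
proof (induction t rule: measure_induct_rule[where f=deg])
  case (less t)
  let ?n = "deg t"
  define S where "S = (\<Sum>k\<in>{1..<?n}. hmult (e (nseg t 0 k)) (basis (nseg t k ?n)) :: _ \<Rightarrow>\<^sub>0 'k)"
  define G where "G k l = (tensor (hmult (e (nseg t 0 k)) (basis (nseg t k l))) (basis (nseg t l ?n)) :: _ \<Rightarrow>\<^sub>0 'k)" for k l
  have et: "e t = basis t - S" using less.prems by (simp add: e.simps[of t] S_def)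
  have prim: "(e (nseg t 0 k) :: _ \<Rightarrow>\<^sub>0 'k) \<in> Prim" if "k \<in> {1..<?n}" for k
    using less.IH[of "nseg t 0 k"] that by (simp add: deg_nseg)
  have cop_k: "cop (hmult (e (nseg t 0 k)) (basis (nseg t k ?n))) =
     tensor hunit (hmult (e (nseg t 0 k)) (basis (nseg t k ?n))) + (\<Sum>l\<in>{k..?n}. G k l)"
    if k: "k \<in> {1..<?n}" for k
  proof -
    have d: "deg (nseg t k ?n) = ?n - k" by (simp add: deg_nseg)
    have "tmult (tensor (e (nseg t 0 k)) hunit) (cop (basis (nseg t k ?n))) =
        (\<Sum>j\<in>{0..?n-k}. G k (k + j))"
      unfolding cop_basis_eq d lin_sum[OF lin_tmult2] tmult_tensor_basis G_def
      using k by (intro sum.cong refl) (simp add: nseg_nseg)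
    also have "\<dots> = (\<Sum>l\<in>{k..?n}. G k l)" using k by (intro shift_sum) simp
    finally show ?thesis by (simp add: Prim_mult[OF prim[OF k]])
  qed
  have copS: "cop S = tensor hunit S + (\<Sum>k\<in>{1..<?n}. \<Sum>l\<in>{k..?n}. G k l)"
    unfolding S_def lin_sum[OF lin_cop] lin_sum[OF lin_tensor2]
    by (simp add: cop_k sum.distrib)
  have D: "(\<Sum>k\<in>{1..<?n}. \<Sum>l\<in>{k..?n}. G k l) =
      (\<Sum>l\<in>{1..<?n}. basis (nseg t 0 l, nseg t l ?n)) + tensor S hunit"
  proof -
    let ?H = "\<lambda>l. \<Sum>k\<in>{k\<in>{1..<?n}. k \<le> l}. G k l"
    have "(\<Sum>k\<in>{1..<?n}. \<Sum>l\<in>{k..?n}. G k l) = (\<Sum>k\<in>{1..<?n}. \<Sum>l\<in>{l\<in>{0..?n}. k \<le> l}. G k l)"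
      by (intro sum.cong refl) auto
    also have "\<dots> = (\<Sum>l\<in>{0..?n}. ?H l)"
      by (rule sum.swap_restrict) auto
    also have "\<dots> = ?H 0 + (\<Sum>l\<in>{1..<?n}. ?H l) + ?H ?n"
      by (rule sum_ends) (use less.prems in simp)
    also have "?H 0 = 0" by (intro sum.neutral) auto
    also have "?H ?n = tensor S hunit"
    proof -
      have "{k\<in>{1..<?n}. k \<le> ?n} = {1..<?n}" by auto
      then show ?thesis
        unfolding S_def lin_sum[OF lin_tensor1] G_def by (simp add: hunit_basis)
    qed
    also have "(\<Sum>l\<in>{1..<?n}. ?H l) = (\<Sum>l\<in>{1..<?n}. basis (nseg t 0 l, nseg t l ?n))"
    proof (intro sum.cong refl)
      fix l assume l: "l \<in> {1..<?n}"
      let ?s = "nseg t 0 l"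
      have ds: "deg ?s = l" using l by (simp add: deg_nseg)
      have "{k\<in>{1..<?n}. k \<le> l} = {1..l}" using l by auto
      then have "?H l = tensor (\<Sum>k\<in>{1..l}. hmult (e (nseg t 0 k)) (basis (nseg t k l))) (basis (nseg t l ?n))"
        unfolding lin_sum[OF lin_tensor1] G_def by simp
      also have "(\<Sum>k\<in>{1..l}. hmult (e (nseg t 0 k)) (basis (nseg t k l))) = (basis ?s :: _ \<Rightarrow>\<^sub>0 'k)"
      proof -
        have "(basis ?s :: _ \<Rightarrow>\<^sub>0 'k) = (\<Sum>k\<in>{0..l}. hmult (e (nseg ?s 0 k)) (basis (nseg ?s k l)))"
          using E3_basis[of ?s, symmetric] ds l by simp
        also have "\<dots> = (\<Sum>k\<in>{0..l}. hmult (e (nseg t 0 k)) (basis (nseg t k l)))"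
          by (intro sum.cong refl) (simp add: nseg_nseg)
        also have "\<dots> = (\<Sum>k\<in>{Suc 0..l}. hmult (e (nseg t 0 k)) (basis (nseg t k l)))"
          by (simp add: sum.atLeast_Suc_atMost)
        finally show ?thesis by simp
      qed
      finally show "?H l = basis (nseg t 0 l, nseg t l ?n)" by simp
    qed
    finally show ?thesis by simp
  qed
  have copt: "cop (basis t) = basis (odot, t) + (\<Sum>l\<in>{1..<?n}. basis (nseg t 0 l, nseg t l ?n)) + (basis (t, odot) :: _ \<Rightarrow>\<^sub>0 'k)"
    unfolding cop_basis_eq using less.prems by (simp add: sum_ends nseg_all)
  have "cop (e t) = cop (basis t) - cop S" by (simp add: et is_linear_minus[OF lin_cop])
  also have "\<dots> = tensor hunit (basis t - S) + tensor (basis t - S) hunit"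
    unfolding copS D copt is_linear_minus[OF lin_tensor1] is_linear_minus[OF lin_tensor2]
    by (simp add: hunit_basis)
  finally show ?case by (simp add: Prim_def et)
qed



definition prodl :: "ntree list \<Rightarrow> ntree" where
  "prodl xs = foldr slash xs odot"

lemma prodl_Nil[simp]: "prodl [] = odot" by (simp add: prodl_def)
lemma prodl_Cons[simp]: "prodl (a # xs) = slash a (prodl xs)" by (simp add: prodl_def)
lemma prodl_append: "prodl (xs @ ys) = slash (prodl xs) (prodl ys)"
  by (induction xs) (simp_all add: slash_assoc)

definition phi :: "(ntree list \<Rightarrow>\<^sub>0 'k::comm_ring_1) \<Rightarrow> (ntree \<Rightarrow>\<^sub>0 'k)" where
  "phi = lin_ext (\<lambda>xs. basis (prodl xs))"

lemma lin_phi[intro]: "is_linear phi" by (simp add: phi_def is_linear_lin_ext)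
lemma phi_basis[simp]: "phi (basis xs) = basis (prodl xs)" by (simp add: phi_def)

lemma cat_basis[simp]: "cat (basis xs) (basis ys) = (basis (xs @ ys) :: _ \<Rightarrow>\<^sub>0 'k::comm_ring_1)"
  by (simp add: cat_def)
lemma lin_cat1[intro]: "is_linear (\<lambda>x. cat x y)" unfolding cat_def by (intro is_linear_bil1 is_linear_id)
lemma lin_cat2[intro]: "is_linear (\<lambda>y. cat x y)" unfolding cat_def by (intro is_linear_bil2 is_linear_id)
lemma lin_iota[intro]: "is_linear iota" by (simp add: iota_def is_linear_lin_ext)
lemma iota_basis[simp]: "iota (basis a) = (basis [a] :: _ \<Rightarrow>\<^sub>0 'k::comm_ring_1)" by (simp add: iota_def)
lemma lin_decat[intro]: "is_linear decat" by (simp add: decat_def is_linear_lin_ext)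

lemma iota_zero[simp]: "iota 0 = (0 :: _ \<Rightarrow>\<^sub>0 'k::comm_ring_1)" by (rule is_linear_zero[OF lin_iota])
lemma cat_zero_left[simp]: "cat 0 y = (0 :: _ \<Rightarrow>\<^sub>0 'k::comm_ring_1)" by (rule is_linear_zero[OF lin_cat1])

lemma phi_cat: "phi (cat x y) = hmult (phi x) (phi (y :: _ \<Rightarrow>\<^sub>0 'k::comm_ring_1))"
proof (rule bil_eqI[where F="\<lambda>x y. phi (cat x y)"])
  fix y :: "_ \<Rightarrow>\<^sub>0 'k"
  show "is_linear (\<lambda>x. phi (cat x y))" by (rule is_linear_comp[OF lin_phi lin_cat1])
  show "is_linear (\<lambda>x. hmult (phi x) (phi y))" by (rule is_linear_comp[OF lin_hmult1 lin_phi])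
next
  fix x :: "_ \<Rightarrow>\<^sub>0 'k"
  show "is_linear (\<lambda>y. phi (cat x y))" by (rule is_linear_comp[OF lin_phi lin_cat2])
  show "is_linear (\<lambda>y. hmult (phi x) (phi y))" by (rule is_linear_comp[OF lin_hmult2 lin_phi])
qed (simp add: prodl_append)

lemma phi_iota[simp]: "phi (iota v) = (v :: _ \<Rightarrow>\<^sub>0 'k::comm_ring_1)"
  by (rule lin_eqI[OF is_linear_comp[OF lin_phi lin_iota] is_linear_id]) simp

lemma phi_nil[simp]: "phi (basis []) = (hunit :: _ \<Rightarrow>\<^sub>0 'k::comm_ring_1)"
  by (simp add: hunit_basis)

lemma tens_Nil[simp]: "tens [] = basis []" by (simp add: tens_def)
lemma tens_Cons[simp]: "tens (v # vs) = cat (iota v) (tens vs)" by (simp add: tens_def)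

section \<open>the tensor algebra T(V)\<close>

lemma T_tens: "set vs \<subseteq> V \<Longrightarrow> tens vs \<in> tensor_alg V"
  unfolding tensor_alg_def
  by (rule CollectI, rule exI[of _ 1], rule exI[of _ "\<lambda>_. 1"], rule exI[of _ "\<lambda>_. vs"]) simp

lemma T_zero: "0 \<in> tensor_alg V"
  unfolding tensor_alg_def by (rule CollectI, rule exI[of _ 0]) simp

lemma sum_lessThan_add:
  fixes f :: "nat \<Rightarrow> 'a::comm_monoid_add"
  shows "(\<Sum>i<m + n. f i) = (\<Sum>i<m. f i) + (\<Sum>i<n. f (m + i))"
  by (induction n) (simp_all add: add.assoc)

lemma T_add: assumes "x \<in> tensor_alg V" "y \<in> tensor_alg V" shows "x + y \<in> tensor_alg V"
proof -
  obtain m1 c1 vs1 where x: "x = (\<Sum>i<(m1::nat). smult (c1 i) (tens (vs1 i)))" "\<forall>i<m1. set (vs1 i) \<subseteq> V"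
    using assms(1) unfolding tensor_alg_def by blast
  obtain m2 c2 vs2 where y: "y = (\<Sum>i<(m2::nat). smult (c2 i) (tens (vs2 i)))" "\<forall>i<m2. set (vs2 i) \<subseteq> V"
    using assms(2) unfolding tensor_alg_def by blast
  define c where "c i = (if i < m1 then c1 i else c2 (i - m1))" for i
  define vs where "vs i = (if i < m1 then vs1 i else vs2 (i - m1))" for i
  have "x + y = (\<Sum>i<m1 + m2. smult (c i) (tens (vs i)))"
    unfolding sum_lessThan_add x y c_def vs_def by simp
  moreover have "\<forall>i<m1 + m2. set (vs i) \<subseteq> V" using x y by (auto simp: vs_def)
  ultimately show ?thesis unfolding tensor_alg_def by blast
qed

lemma T_smult: assumes "x \<in> tensor_alg V" shows "smult c x \<in> tensor_alg V"
proof -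
  obtain m c1 vs1 where x: "x = (\<Sum>i<(m::nat). smult (c1 i) (tens (vs1 i)))" "\<forall>i<m. set (vs1 i) \<subseteq> V"
    using assms(1) unfolding tensor_alg_def by blast
  have eq: "smult c x = (\<Sum>i<m. smult (c * c1 i) (tens (vs1 i)))" by (simp add: x smult_sum)
  show ?thesis unfolding tensor_alg_def using x(2)
    by (intro CollectI exI[of _ m] exI[of _ "\<lambda>i. c * c1 i"] exI[of _ vs1] conjI) (simp_all add: eq)
qed

lemma T_sum: "(\<And>a. a \<in> S \<Longrightarrow> f a \<in> tensor_alg V) \<Longrightarrow> sum f S \<in> tensor_alg V"
  by (induction S rule: infinite_finite_induct) (auto intro: T_zero T_add)

lemma T_cat_iota: assumes v: "v \<in> V" and y: "y \<in> tensor_alg V" shows "cat (iota v) y \<in> tensor_alg V"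
proof -
  obtain m c vs where y: "y = (\<Sum>i<(m::nat). smult (c i) (tens (vs i)))" "\<forall>i<m. set (vs i) \<subseteq> V"
    using y unfolding tensor_alg_def by blast
  have eq: "cat (iota v) y = (\<Sum>i<m. smult (c i) (tens (v # vs i)))"
    unfolding y lin_sum[OF lin_cat2] is_linear_smult[OF lin_cat2] by simp
  show ?thesis unfolding tensor_alg_def using y(2) v
    by (intro CollectI exI[of _ m] exI[of _ c] exI[of _ "\<lambda>i. v # vs i"] conjI) (simp_all add: eq)
qed

lemma T_induct:
  assumes F: "is_linear F" and G: "is_linear G" and tens: "\<And>vs. set vs \<subseteq> V \<Longrightarrow> F (tens vs) = G (tens vs)"
    and x: "x \<in> tensor_alg V"
  shows "F x = G x"
proof -
  obtain m c vs where x: "x = (\<Sum>i<(m::nat). smult (c i) (tens (vs i)))" "\<forall>i<m. set (vs i) \<subseteq> V"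
    using x unfolding tensor_alg_def by blast
  show ?thesis using x tens by (simp add: is_linear_sum[OF F] is_linear_sum[OF G] is_linear_smult[OF F] is_linear_smult[OF G])
qed


section \<open>the inverse psi\<close>

function psi :: "ntree \<Rightarrow> (ntree list \<Rightarrow>\<^sub>0 'k::comm_ring_1)" where
  "psi t = (if deg t = 0 then basis [] else (\<Sum>k\<in>{1..deg t}. cat (iota (e (nseg t 0 k))) (psi (nseg t k (deg t)))))"
  by auto
termination by (relation "measure deg") (auto simp: deg_nseg)

declare psi.simps[simp del]

definition Psi :: "(ntree \<Rightarrow>\<^sub>0 'k::comm_ring_1) \<Rightarrow> (ntree list \<Rightarrow>\<^sub>0 'k)" where
  "Psi = lin_ext psi"

definition Cop :: "(ntree \<times> ntree \<Rightarrow>\<^sub>0 'k::comm_ring_1) \<Rightarrow> (ntree list \<Rightarrow>\<^sub>0 'k)" where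
  "Cop = lin_ext (\<lambda>(a, b). cat (iota (e a)) (psi b))"

lemma lin_Psi[intro]: "is_linear Psi" by (simp add: Psi_def is_linear_lin_ext)
lemma lin_Cop[intro]: "is_linear Cop" by (simp add: Cop_def is_linear_lin_ext)
lemma Psi_basis[simp]: "Psi (basis t) = psi t" by (simp add: Psi_def)
lemma psi_odot[simp]: "psi odot = basis []" by (simp add: psi.simps)

lemma Cop_tensor: "Cop (tensor x y) = cat (iota (E x)) (Psi (y :: _ \<Rightarrow>\<^sub>0 'k::comm_ring_1))"
proof (rule bil_eqI[where F="\<lambda>x y. Cop (tensor x y)"])
  fix y :: "_ \<Rightarrow>\<^sub>0 'k"
  show "is_linear (\<lambda>x. Cop (tensor x y))" by (rule is_linear_comp[OF lin_Cop lin_tensor1])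
  show "is_linear (\<lambda>x. cat (iota (E x)) (Psi y))"
    by (rule is_linear_comp[OF lin_cat1 is_linear_comp[OF lin_iota lin_E]])
next
  fix x :: "_ \<Rightarrow>\<^sub>0 'k"
  show "is_linear (\<lambda>y. Cop (tensor x y))" by (rule is_linear_comp[OF lin_Cop lin_tensor2])
  show "is_linear (\<lambda>y. cat (iota (E x)) (Psi y))" by (rule is_linear_comp[OF lin_cat2 lin_Psi])
qed (simp add: Cop_def)

lemma Psi_formula: "Psi x = smult (counit x) (basis []) + Cop (cop (x :: _ \<Rightarrow>\<^sub>0 'k::comm_ring_1))"
proof (rule lin_eqI[where F=Psi])
  show "is_linear (\<lambda>x. smult (counit x) (basis []) + Cop (cop (x :: _ \<Rightarrow>\<^sub>0 'k)))"
    by (intro is_linear_plus lin_counit_smult is_linear_comp[OF lin_Cop lin_cop])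
  fix t
  show "Psi (basis t) = smult (counit (basis t)) (basis []) + Cop (cop (basis t) :: _ \<Rightarrow>\<^sub>0 'k)"
  proof (cases "deg t = 0")
    case True
    then have t: "t = odot" by (simp add: deg_zero_iff)
    show ?thesis by (simp add: t cop_basis_eq Cop_def counit_basis)
  next
    case False
    have "Cop (cop (basis t) :: _ \<Rightarrow>\<^sub>0 'k) = (\<Sum>k\<in>{0..deg t}. cat (iota (e (nseg t 0 k))) (psi (nseg t k (deg t))))"
      unfolding cop_basis_eq lin_sum[OF lin_Cop] by (simp add: Cop_def)
    also have "\<dots> = psi t"
      using False by (simp add: sum.atLeast_Suc_atMost psi.simps[of t])
    finally show ?thesis using False by (simp add: counit_basis deg_zero_iff)
  qed
qed auto

lemma Psi_prim_mult: assumes v: "v \<in> Prim" shows "Psi (hmult v h) = cat (iota v) (Psi (h :: _ \<Rightarrow>\<^sub>0 'k::field))"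
proof (rule lin_eqI[where F="\<lambda>h. Psi (hmult v h)"])
  show "is_linear (\<lambda>h. Psi (hmult v h))" by (rule is_linear_comp[OF lin_Psi lin_hmult2])
  show "is_linear (\<lambda>h. cat (iota v) (Psi h))" by (rule is_linear_comp[OF lin_cat2 lin_Psi])
  fix w
  let ?n = "deg w"
  have c0: "counit (hmult v (basis w)) = 0" by (simp add: counit_mult Prim_counit[OF v])
  have "Psi (hmult v (basis w)) = Cop (cop (hmult v (basis w)))"
    by (simp add: Psi_formula[of "hmult v (basis w)"] c0)
  also have "\<dots> = (\<Sum>j\<in>{0..?n}. cat (iota (E (hmult v (basis (nseg w 0 j))))) (psi (nseg w j ?n)))"
    unfolding Prim_mult[OF v] is_linear_add[OF lin_Cop] Cop_tensor cop_basis_eq lin_sum[OF lin_tmult2]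
      tmult_tensor_basis lin_sum[OF lin_Cop] by simp
  also have "\<dots> = (\<Sum>j\<in>{0..?n}. if j = 0 then cat (iota v) (psi w) else 0)"
    by (intro sum.cong refl) (auto simp: E_prim_mult[OF v] counit_basis nseg_0_deg nseg_all)
  also have "\<dots> = cat (iota v) (Psi (basis w))" by simp
  finally show "Psi (hmult v (basis w)) = cat (iota v) (Psi (basis w))" .
qed

lemma phi_psi: "phi (psi t) = (basis t :: _ \<Rightarrow>\<^sub>0 'k::comm_ring_1)"
proof (induction t rule: measure_induct_rule[where f=deg])
  case (less t)
  show ?case
  proof (cases "deg t = 0")
    case True
    then show ?thesis by (simp add: deg_zero_iff hunit_basis)
  next
    case False
    have "phi (psi t :: _ \<Rightarrow>\<^sub>0 'k) = (\<Sum>k\<in>{1..deg t}. hmult (e (nseg t 0 k)) (phi (psi (nseg t k (deg t)))))"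
      using False by (simp add: psi.simps[of t] lin_sum[OF lin_phi] phi_cat)
    also have "\<dots> = (\<Sum>k\<in>{1..deg t}. hmult (e (nseg t 0 k)) (basis (nseg t k (deg t))))"
      by (intro sum.cong refl) (simp add: less.IH deg_nseg)
    also have "\<dots> = basis t"
      using E3_basis[of t] False by (simp add: sum.atLeast_Suc_atMost)
    finally show ?thesis .
  qed
qed

lemma phi_Psi: "phi (Psi x) = (x :: _ \<Rightarrow>\<^sub>0 'k::comm_ring_1)"
  by (rule lin_eqI[OF is_linear_comp[OF lin_phi lin_Psi] is_linear_id]) (simp add: phi_psi)

lemma psi_T: "(psi t :: _ \<Rightarrow>\<^sub>0 'k::field) \<in> tensor_alg Prim"
proof (induction t rule: measure_induct_rule[where f=deg])
  case (less t)
  show ?case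
  proof (cases "deg t = 0")
    case True
    then show ?thesis using T_tens[of "[]" Prim] by (simp add: deg_zero_iff)
  next
    case False
    show ?thesis
      unfolding psi.simps[of t] using False
      by (auto intro!: T_sum T_cat_iota e_prim less.IH simp: deg_nseg)
  qed
qed

lemma Psi_T: "(Psi x :: _ \<Rightarrow>\<^sub>0 'k::field) \<in> tensor_alg Prim"
  unfolding Psi_def lin_ext_def by (intro T_sum T_smult psi_T)

lemma Psi_phi: assumes "y \<in> tensor_alg Prim" shows "Psi (phi y) = (y :: _ \<Rightarrow>\<^sub>0 'k::field)"
proof (rule T_induct[OF is_linear_comp[OF lin_Psi lin_phi] is_linear_id _ assms])
  fix vs :: "(_ \<Rightarrow>\<^sub>0 'k) list"
  show "set vs \<subseteq> Prim \<Longrightarrow> Psi (phi (tens vs)) = tens vs"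
    by (induction vs) (simp_all add: hunit_basis phi_cat Psi_prim_mult)
qed


definition lmult :: "(ntree list \<times> ntree list \<Rightarrow>\<^sub>0 'k::comm_ring_1) \<Rightarrow> (ntree list \<times> ntree list \<Rightarrow>\<^sub>0 'k) \<Rightarrow> (ntree list \<times> ntree list \<Rightarrow>\<^sub>0 'k)" where
  "lmult = bil_ext (\<lambda>(a, b) (c, d). basis (a @ c, b @ d))"

lemma lin_lmult1[intro]: "is_linear (\<lambda>x. lmult x y)" unfolding lmult_def by (intro is_linear_bil1 is_linear_id)
lemma lin_lmult2[intro]: "is_linear (\<lambda>y. lmult x y)" unfolding lmult_def by (intro is_linear_bil2 is_linear_id)
lemma lmult_basis[simp]: "lmult (basis (a, b)) (basis (c, d)) = (basis (a @ c, b @ d) :: _ \<Rightarrow>\<^sub>0 'k::comm_ring_1)"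
  by (simp add: lmult_def)

lemma decat_basis: "decat (basis xs) = (\<Sum>k\<in>{0..length xs}. basis (take k xs, drop k xs) :: _ \<Rightarrow>\<^sub>0 'k::comm_ring_1)"
  by (simp add: decat_def)

lemma decat_cat_iota:
  "decat (cat (iota v) y) = tensor (basis []) (cat (iota v) y) + lmult (tensor (iota v) (basis [])) (decat (y :: _ \<Rightarrow>\<^sub>0 'k::comm_ring_1))"
proof (rule bil_eqI[where F="\<lambda>v y. decat (cat (iota v) y)"])
  fix y :: "_ \<Rightarrow>\<^sub>0 'k"
  show "is_linear (\<lambda>v. decat (cat (iota v) y))"
    by (rule is_linear_comp[OF lin_decat is_linear_comp[OF lin_cat1 lin_iota]])
  show "is_linear (\<lambda>v. tensor (basis []) (cat (iota v) y) + lmult (tensor (iota v) (basis [])) (decat y))"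
    by (intro is_linear_plus is_linear_comp[OF lin_tensor2 is_linear_comp[OF lin_cat1 lin_iota]]
        is_linear_comp[OF lin_lmult1 is_linear_comp[OF lin_tensor1 lin_iota]])
next
  fix v :: "_ \<Rightarrow>\<^sub>0 'k"
  show "is_linear (\<lambda>y. decat (cat (iota v) y))" by (rule is_linear_comp[OF lin_decat lin_cat2])
  show "is_linear (\<lambda>y. tensor (basis []) (cat (iota v) y) + lmult (tensor (iota v) (basis [])) (decat y))"
    by (intro is_linear_plus is_linear_comp[OF lin_tensor2 lin_cat2] is_linear_comp[OF lin_lmult2 lin_decat])
next
  fix a xs
  show "decat (cat (iota (basis a)) (basis xs)) =
    tensor (basis []) (cat (iota (basis a)) (basis xs)) + lmult (tensor (iota (basis a)) (basis [])) (decat (basis xs) :: _ \<Rightarrow>\<^sub>0 'k)"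
  proof -
    have "decat (basis (a # xs)) = (\<Sum>k\<in>{0..Suc (length xs)}. basis (take k (a # xs), drop k (a # xs)) :: _ \<Rightarrow>\<^sub>0 'k)"
      by (simp add: decat_basis del: sum.atLeast0_atMost_Suc)
    also have "\<dots> = basis ([], a # xs) + (\<Sum>k\<in>{0..length xs}. basis (a # take k xs, drop k xs))"
      by (subst sum.atLeast0_atMost_Suc_shift) simp
    finally show ?thesis
      by (simp add: decat_basis lin_sum[OF lin_lmult2])
  qed
qed

lemma tmap_phi_tensor: "tmap phi phi (tensor x y) = tensor (phi x) (phi (y :: _ \<Rightarrow>\<^sub>0 'k::comm_ring_1))"
proof (rule bil_eqI[where F="\<lambda>x y. tmap phi phi (tensor x y)"])
  fix y :: "_ \<Rightarrow>\<^sub>0 'k"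
  show "is_linear (\<lambda>x. tmap phi phi (tensor x y))" by (rule is_linear_comp[OF lin_tmap lin_tensor1])
  show "is_linear (\<lambda>x. tensor (phi x) (phi y))" by (rule is_linear_comp[OF lin_tensor1 lin_phi])
next
  fix x :: "_ \<Rightarrow>\<^sub>0 'k"
  show "is_linear (\<lambda>y. tmap phi phi (tensor x y))" by (rule is_linear_comp[OF lin_tmap lin_tensor2])
  show "is_linear (\<lambda>y. tensor (phi x) (phi y))" by (rule is_linear_comp[OF lin_tensor2 lin_phi])
qed (simp add: tmap_basis)

lemma tmap_phi_lmult: "tmap phi phi (lmult z w) = tmult (tmap phi phi z) (tmap phi phi (w :: _ \<Rightarrow>\<^sub>0 'k::comm_ring_1))"
proof (rule bil_eqI[where F="\<lambda>z w. tmap phi phi (lmult z w)"])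
  fix w :: "_ \<Rightarrow>\<^sub>0 'k"
  show "is_linear (\<lambda>z. tmap phi phi (lmult z w))" by (rule is_linear_comp[OF lin_tmap lin_lmult1])
  show "is_linear (\<lambda>z. tmult (tmap phi phi z) (tmap phi phi w))" by (rule is_linear_comp[OF lin_tmult1 lin_tmap])
next
  fix z :: "_ \<Rightarrow>\<^sub>0 'k"
  show "is_linear (\<lambda>w. tmap phi phi (lmult z w))" by (rule is_linear_comp[OF lin_tmap lin_lmult2])
  show "is_linear (\<lambda>w. tmult (tmap phi phi z) (tmap phi phi w))" by (rule is_linear_comp[OF lin_tmult2 lin_tmap])
next
  fix p q :: "ntree list \<times> ntree list"
  show "tmap phi phi (lmult (basis p) (basis q)) = tmult (tmap phi phi (basis p)) (tmap phi phi (basis q) :: _ \<Rightarrow>\<^sub>0 'k)"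
    by (cases p, cases q) (simp add: tmap_basis prodl_append)
qed

lemma cop_phi_tens: "set vs \<subseteq> Prim \<Longrightarrow> cop (phi (tens vs)) = tmap phi phi (decat (tens vs :: _ \<Rightarrow>\<^sub>0 'k::field))"
proof (induction vs)
  case Nil
  then show ?case by (simp add: hunit_basis cop_basis_eq decat_basis tmap_basis)
next
  case (Cons v vs)
  then have v: "v \<in> Prim" and IH: "cop (phi (tens vs)) = tmap phi phi (decat (tens vs :: _ \<Rightarrow>\<^sub>0 'k))" by auto
  show ?case
    by (simp add: phi_cat Prim_mult[OF v] decat_cat_iota is_linear_add[OF lin_tmap] tmap_phi_tensor
        tmap_phi_lmult IH hunit_basis)
qed

lemma lookup_cat_nil: "Poly_Mapping.lookup (cat x y) [] = Poly_Mapping.lookup x [] * Poly_Mapping.lookup (y :: _ \<Rightarrow>\<^sub>0 'k::comm_ring_1) []"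
proof -
  have "Poly_Mapping.lookup (cat x y) [] = (\<Sum>a\<in>Poly_Mapping.keys x. Poly_Mapping.lookup x a *
     (if a = [] then (\<Sum>b\<in>Poly_Mapping.keys y. Poly_Mapping.lookup y b * (if b = [] then 1 else 0)) else 0))"
    unfolding cat_def lookup_bil_ext
    by (intro sum.cong refl) (auto simp: lookup_basis sum_distrib_left mult.assoc intro!: sum.cong)
  then show ?thesis by (simp add: sum_keys_delta)
qed

lemma lookup_iota_nil: "Poly_Mapping.lookup (iota v) [] = (0 :: 'k::comm_ring_1)"
  unfolding iota_def lookup_lin_ext by (simp add: lookup_basis)

lemma counit_phi_tens: "set vs \<subseteq> Prim \<Longrightarrow> counit (phi (tens vs)) = Poly_Mapping.lookup (tens vs :: _ \<Rightarrow>\<^sub>0 'k::field) []"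
proof (induction vs)
  case Nil
  then show ?case by (simp add: lookup_basis counit_basis)
next
  case (Cons v vs)
  then have v: "v \<in> Prim" by auto
  show ?case by (simp add: phi_cat counit_mult Prim_counit[OF v] lookup_cat_nil lookup_iota_nil)
qed

lemma counit_phi: assumes "x \<in> tensor_alg Prim" shows "counit (phi x) = Poly_Mapping.lookup (x :: _ \<Rightarrow>\<^sub>0 'k::field) []"
proof -
  obtain m c vs where x: "x = (\<Sum>i<(m::nat). smult (c i) (tens (vs i)))" "\<forall>i<m. set (vs i) \<subseteq> Prim"
    using assms unfolding tensor_alg_def by blast
  show ?thesis
    using x by (simp add: lin_sum[OF lin_phi] is_linear_smult[OF lin_phi] counit_sum counit_smult lookup_sum counit_phi_tens)
qed

theorem proposition4p2:
  shows
    \<comment> \<open>/ is associative with unit the one-node tree\<close>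
    "(\<forall>x y z :: ntree \<Rightarrow>\<^sub>0 'k::field. hmult (hmult x y) z = hmult x (hmult y z))
   \<and> (\<forall>x :: ntree \<Rightarrow>\<^sub>0 'k. hmult hunit x = x \<and> hmult x hunit = x)
    \<comment> \<open>\<Delta>_s is coassociative and counital\<close>
   \<and> (\<forall>x :: ntree \<Rightarrow>\<^sub>0 'k. reassoc (tmap cop (\<lambda>z. z) (cop x)) = tmap (\<lambda>z. z) cop (cop x))
   \<and> (\<forall>x :: ntree \<Rightarrow>\<^sub>0 'k. counit_left (cop x) = x \<and> counit_right (cop x) = x)
    \<comment> \<open>infinitesimal compatibility\<close>
   \<and> (\<forall>x y :: ntree \<Rightarrow>\<^sub>0 'k. cop (hmult x y) =
        tmult (cop x) (tensor hunit y) + tmult (tensor x hunit) (cop y) - tensor x y)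
    \<comment> \<open>graded by degree and connected\<close>
   \<and> (\<forall>t w. deg (slash t w) = deg t + deg w)
   \<and> (\<forall>t. \<forall>p \<in> Poly_Mapping.keys (cop (basis t) :: ntree \<times> ntree \<Rightarrow>\<^sub>0 'k). deg (fst p) + deg (snd p) = deg t)
   \<and> {t. deg t = 0} = {odot}
    \<comment> \<open>isomorphism of infinitesimal bialgebras with T(Prim)\<close>
   \<and> (\<exists>\<phi> :: (ntree list \<Rightarrow>\<^sub>0 'k) \<Rightarrow> (ntree \<Rightarrow>\<^sub>0 'k).
        is_linear \<phi>
      \<and> bij_betw \<phi> (tensor_alg Prim) UNIV
      \<and> \<phi> (basis []) = hunit
      \<and> (\<forall>x\<in>tensor_alg Prim. \<forall>y\<in>tensor_alg Prim. \<phi> (cat x y) = hmult (\<phi> x) (\<phi> y))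
      \<and> (\<forall>x\<in>tensor_alg Prim. cop (\<phi> x) = tmap \<phi> \<phi> (decat x))
      \<and> (\<forall>x\<in>tensor_alg Prim. counit (\<phi> x) = Poly_Mapping.lookup x []))"
proof (intro conjI allI ballI)
  show "\<exists>\<phi> :: (ntree list \<Rightarrow>\<^sub>0 'k) \<Rightarrow> (ntree \<Rightarrow>\<^sub>0 'k).
        is_linear \<phi>
      \<and> bij_betw \<phi> (tensor_alg Prim) UNIV
      \<and> \<phi> (basis []) = hunit
      \<and> (\<forall>x\<in>tensor_alg Prim. \<forall>y\<in>tensor_alg Prim. \<phi> (cat x y) = hmult (\<phi> x) (\<phi> y))
      \<and> (\<forall>x\<in>tensor_alg Prim. cop (\<phi> x) = tmap \<phi> \<phi> (decat x))
      \<and> (\<forall>x\<in>tensor_alg Prim. counit (\<phi> x) = Poly_Mapping.lookup x [])"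
  proof (intro exI[of _ phi] conjI ballI)
    show "bij_betw (phi :: _ \<Rightarrow> ntree \<Rightarrow>\<^sub>0 'k) (tensor_alg Prim) UNIV"
    proof (rule bij_betw_byWitness[where f'=Psi])
      show "\<forall>a\<in>tensor_alg Prim. Psi (phi a) = (a :: _ \<Rightarrow>\<^sub>0 'k)" by (simp add: Psi_phi)
      show "\<forall>a'\<in>UNIV. phi (Psi a') = (a' :: _ \<Rightarrow>\<^sub>0 'k)" by (simp add: phi_Psi)
      show "phi ` tensor_alg Prim \<subseteq> (UNIV :: (_ \<Rightarrow>\<^sub>0 'k) set)" by simp
      show "Psi ` UNIV \<subseteq> (tensor_alg Prim :: (_ \<Rightarrow>\<^sub>0 'k) set)" using Psi_T by blast
    qed
    fix x :: "_ \<Rightarrow>\<^sub>0 'k" assume x: "x \<in> tensor_alg Prim"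
    show "cop (phi x) = tmap phi phi (decat x)"
      by (rule T_induct[OF is_linear_comp[OF lin_cop lin_phi] is_linear_comp[OF lin_tmap lin_decat] cop_phi_tens x])
    show "counit (phi x) = Poly_Mapping.lookup x []" by (rule counit_phi[OF x])
  qed (auto simp: phi_cat hunit_basis)
qed (auto simp: hmult_assoc cop_coassoc counit_left_cop counit_right_cop compat deg_slash cop_graded deg_zero_iff)


end
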